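(* Assume $\mathbf{E}(\ln\rho_0)\ne0$ and let $\kappa>0$ be defined by $\mathbf{E}(\rho_0^\kappa)=1$ if $\mathbf{E}(\ln\rho_0)<0$, and by $\mathbf{E}(\rho_0^{-\kappa})=1$ if $\mathbf{E}(\ln\rho_0)>0$. Let $\gamma>0$ and $0<\varepsilon<\gamma/\kappa$. Then for $\mu$-almost all $\boldsymbol\omega$ there is $n_0(\boldsymbol\omega,\varepsilon)$ such that for all $n\ge n_0(\boldsymbol\omega,\varepsilon)$ there is a trap of depth $\big(\frac{\gamma}{\kappa}-\varepsilon\big)\ln n$ located at some interval contained in $[0,n^\gamma]$.
   Context: Setting: $(\omega_x^+)_{x\in\mathbb{Z}}$ i.i.d. with law $\mu$, $\omega_x^+\in[\varepsilon_0,1-\varepsilon_0]$ for some $\varepsilon_0>0$, $\omega_x^-=1-\omega_x^+$, $\rho_i=\omega_i^-/\omega_i^+$, $\mathbf{E}$ expectation under $\mu$; strict nestling: $\inf\{a:\mu(\omega_0^+\le a)>0\}<1/2<\sup\{a:\mu(\omega_0^+\ge a)>0\}$. Potential: $V(0)=0$, $V(x)=\sum_{i=1}^x\ln\rho_i$ for $x>0$, $V(x)=\sum_{i=x+1}^0\ln(1/\rho_i)$ for $x<0$. Trap: there is a trap of depth $h$ located at $[x-b_1,x+b_2]$ with bottom at $x$ if $V(x)=\min_{y\in[x-b_1,x+b_2]}V(y)$, $V(x-b_1)-V(x)\ge h$ and $V(x+b_2)-V(x)\ge h$ (depth at least $h$). *)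

theory Defs
  imports "HOL-Probability.Probability"
begin

text \<open>Environment: omega x is omega_x^+, and rho_i = omega_i^- / omega_i^+ = (1 - omega_i^+)/omega_i^+.\<close>

definition rho :: "(int \<Rightarrow> real) \<Rightarrow> int \<Rightarrow> real" where
  "rho \<omega> i = (1 - \<omega> i) / \<omega> i"

definition potential :: "(int \<Rightarrow> real) \<Rightarrow> int \<Rightarrow> real" where
  "potential \<omega> x =
     (if x = 0 then 0
      else if x > 0 then (\<Sum>i\<in>{1..x}. ln (rho \<omega> i))
      else (\<Sum>i\<in>{x+1..0}. ln (1 / rho \<omega> i)))"

definition trap :: "(int \<Rightarrow> real) \<Rightarrow> real \<Rightarrow> int \<Rightarrow> int \<Rightarrow> int \<Rightarrow> bool" where
  "trap \<omega> h x b1 b2 \<longleftrightarrow>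
     0 \<le> b1 \<and> 0 \<le> b2 \<and>
     (\<forall>y\<in>{x-b1..x+b2}. potential \<omega> x \<le> potential \<omega> y) \<and>
     potential \<omega> (x - b1) - potential \<omega> x \<ge> h \<and>
     potential \<omega> (x + b2) - potential \<omega> x \<ge> h"

end

theory Submission
  imports Defs "HOL-Real_Asymp.Real_Asymp"
begin

lemma exp_quad: fixes y :: real assumes "\<bar>y\<bar> \<le> 1" shows "exp y \<le> 1 + y + y\<^sup>2"
proof (cases "y \<ge> 0")
  case True then show ?thesis using exp_bound[of y] assms by auto
next
  case False
  define z where "z = -y"
  have z: "0 < z" "z \<le> 1" using False assms by (auto simp: z_def)
  have "exp y = inverse (exp z)" by (simp add: z_def exp_minus)
  also have "\<dots> \<le> inverse (1 + z)" using z by (intro le_imp_inverse_le) auto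
  also have "\<dots> \<le> 1 - z + z\<^sup>2"
  proof -
    have "1 \<le> (1 - z + z\<^sup>2) * (1 + z)" using z by (simp add: algebra_simps power2_eq_square power3_eq_cube)
    then show ?thesis using z by (simp add: field_simps)
  qed
  finally show ?thesis by (simp add: z_def)
qed

lemma exp_strict: fixes y :: real assumes "y \<noteq> 0" shows "1 + y < exp y"
proof (cases "1 + y/2 \<ge> 0")
  case True
  have "(1 + y/2)^2 \<le> exp (y/2) ^ 2"
    using True by (intro power_mono) auto
  also have "exp (y/2) ^ 2 = exp y" by (simp flip: exp_of_nat_mult)
  finally have "1 + y + y^2/4 \<le> exp y" by (simp add: power2_eq_square algebra_simps)
  moreover have "y^2 > 0" using assms by simp
  ultimately show ?thesis by linarith
next
  case False
  then have "1 + y < 0" by linarith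
  then show ?thesis using exp_gt_zero[of y] by linarith
qed

lemma exp_m2: "exp (-2::real) \<le> 1/4"
proof -
  have "2 \<le> exp (1::real)" using exp_ge_add_one_self[of 1] by simp
  then have "2*2 \<le> exp (1::real) * exp 1" by (intro mult_mono) auto
  then have "4 \<le> exp (2::real)" by (simp flip: exp_add)
  then show ?thesis by (simp add: exp_minus field_simps)
qed

lemma asym1:
  fixes \<gamma> A c :: real assumes "0 < \<gamma>" "0 < A" "0 < c"
  shows "eventually (\<lambda>x. 0 < x powr \<gamma> / (2 * A * c * ln x + 2 * A) - 1) at_top"
  using assms by real_asymp

lemma asym2:
  fixes \<gamma> A c e c0 :: real assumes "0 < \<gamma>" "0 < A" "0 < c" "0 \<le> e" "e < \<gamma>" "0 < c0"
  shows "eventually (\<lambda>x. 2 * ln x \<le> c0 * x powr (- e) * (x powr \<gamma> / (2 * A * c * ln x + 2 * A) - 1)) at_top"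
  using assms by real_asymp

lemma restrict_UNIV_eq: "restrict f UNIV = f"
  by (auto simp: restrict_def)

context
  fixes mu :: "real measure"
  assumes mu: "prob_space mu"
begin

lemma pps: "product_prob_space (\<lambda>_::int. mu)"
  using mu by (simp add: product_prob_space_def product_prob_space_axioms_def product_sigma_finite_def prob_space_imp_sigma_finite)

lemma psM: "prob_space (PiM (UNIV::int set) (\<lambda>_. mu))"
  using mu by (intro prob_space_PiM) auto

lemma coord_indep: "prob_space.indep_vars (PiM (UNIV::int set) (\<lambda>_. mu)) (\<lambda>_. mu) (\<lambda>i \<omega>. \<omega> i) UNIV"
proof -
  interpret product_prob_space "\<lambda>_::int. mu" "UNIV::int set" by (rule pps)
  show ?thesis
  proof (subst P.indep_vars_iff_distr_eq_PiM)
    show "UNIV \<noteq> {}" by simp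
    show "random_variable mu (\<lambda>\<omega>. \<omega> i)" for i by (rule measurable_component_singleton) simp
    show "distr (PiM UNIV (\<lambda>_. mu)) (PiM UNIV (\<lambda>_. mu)) (\<lambda>x::int\<Rightarrow>real. restrict (\<lambda>i. x i) UNIV) =
      PiM UNIV (\<lambda>i. distr (PiM UNIV (\<lambda>_. mu)) mu (\<lambda>x. x i))"
    proof -
      have "distr (PiM UNIV (\<lambda>_. mu)) mu (\<lambda>x. x i) = mu" for i :: int
        using PiM_component[of i] by simp
      then have e: "PiM UNIV (\<lambda>i::int. distr (PiM UNIV (\<lambda>_. mu)) mu (\<lambda>x. x i)) = PiM UNIV (\<lambda>_. mu)"
        by (intro PiM_cong) auto
      show ?thesis unfolding e restrict_UNIV_eq by (rule distr_id)
    qed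
  qed
qed

lemma block_integral:
  fixes J :: "'j set" and K :: "'j \<Rightarrow> int set"
  assumes J: "finite J" and disj: "disjoint_family_on K J"
    and Gm: "\<And>j. j \<in> J \<Longrightarrow> G j \<in> borel_measurable (PiM (K j) (\<lambda>_. mu))"
    and Gb: "\<And>j x. j \<in> J \<Longrightarrow> \<bar>G j x\<bar> \<le> (1::real)"
  shows "(\<integral>\<omega>. (\<Prod>j\<in>J. G j (restrict \<omega> (K j))) \<partial>PiM UNIV (\<lambda>_. mu)) =
         (\<Prod>j\<in>J. \<integral>\<omega>. G j (restrict \<omega> (K j)) \<partial>PiM UNIV (\<lambda>_. mu))"
proof -
  interpret Q: prob_space "PiM (UNIV::int set) (\<lambda>_. mu)" by (rule psM)
  have "Q.indep_vars (\<lambda>j. PiM (K j) (\<lambda>_. mu)) (\<lambda>j \<omega>. restrict (\<lambda>i. \<omega> i) (K j)) J"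
    by (rule Q.indep_vars_restrict[OF coord_indep]) (use disj in auto)
  then have "Q.indep_vars (\<lambda>_. borel) (\<lambda>j \<omega>. G j (restrict (\<lambda>i. \<omega> i) (K j))) J"
    by (rule Q.indep_vars_compose2) (rule Gm)
  then have ind: "Q.indep_vars (\<lambda>_. borel) (\<lambda>j \<omega>. G j (restrict \<omega> (K j))) J" by simp
  have rv: "(\<lambda>\<omega>. restrict \<omega> (K j)) \<in> measurable (PiM UNIV (\<lambda>_. mu)) (PiM (K j) (\<lambda>_. mu))" for j
    by (rule measurable_restrict_subset) auto
  show ?thesis
  proof (rule Q.indep_vars_lebesgue_integral[OF J ind])
    fix j assume j: "j \<in> J"
    show "integrable (PiM UNIV (\<lambda>_. mu)) (\<lambda>\<omega>. G j (restrict \<omega> (K j)))"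
      by (rule Q.integrable_const_bound[where B=1]) (use Gb[OF j] measurable_comp[OF rv Gm[OF j]] in \<open>auto simp: o_def\<close>)
  qed
qed

end


context
  fixes mu :: "real measure" and g :: "real \<Rightarrow> real" and B :: real
  assumes mu: "prob_space mu" and gm[measurable]: "g \<in> borel_measurable mu"
    and gB: "\<And>x. \<bar>g x\<bar> \<le> B" and B1: "1 \<le> B"
begin

lemma int_eg: "integrable mu (\<lambda>x. exp (t * g x) * (c0 + c1 * g x))"
proof -
  interpret prob_space mu by (rule mu)
  have "AE x in mu. norm (exp (t * g x) * (c0 + c1 * g x)) \<le> exp (\<bar>t\<bar> * B) * (\<bar>c0\<bar> + \<bar>c1\<bar> * B)"
  proof (intro AE_I2)
    fix x
    have "\<bar>t * g x\<bar> \<le> \<bar>t\<bar> * B" using gB[of x] by (simp add: abs_mult mult_left_mono)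
    then have "t * g x \<le> \<bar>t\<bar> * B" by linarith
    then have e: "exp (t * g x) \<le> exp (\<bar>t\<bar> * B)" by simp
    have "\<bar>c0 + c1 * g x\<bar> \<le> \<bar>c0\<bar> + \<bar>c1\<bar> * B"
    proof -
      have "\<bar>c1 * g x\<bar> \<le> \<bar>c1\<bar> * B" using gB[of x] by (simp add: abs_mult mult_left_mono)
      then show ?thesis by linarith
    qed
    then show "norm (exp (t * g x) * (c0 + c1 * g x)) \<le> exp (\<bar>t\<bar> * B) * (\<bar>c0\<bar> + \<bar>c1\<bar> * B)"
      using e by (simp add: abs_mult mult_mono)
  qed
  then show ?thesis
    by (intro integrable_const_bound[where B="exp (\<bar>t\<bar> * B) * (\<bar>c0\<bar> + \<bar>c1\<bar> * B)"]) (use gm in auto)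
qed

lemma int_e: "integrable mu (\<lambda>x. exp (t * g x))"
  using int_eg[of t 1 0] by simp

lemma int_g: "integrable mu g"
  using int_eg[of 0 0 1] by simp

lemma int_ge: "integrable mu (\<lambda>x. g x * exp (t * g x))"
  using int_eg[of t 0 1] by (simp add: mult.commute)

lemma phi_bound:
  assumes "\<bar>d\<bar> * B \<le> 1"
  shows "(\<integral>x. exp ((r + d) * g x) \<partial>mu) \<le> (1 + d\<^sup>2 * B\<^sup>2) * (\<integral>x. exp (r * g x) \<partial>mu) + d * (\<integral>x. g x * exp (r * g x) \<partial>mu)"
proof -
  have "(\<integral>x. exp ((r + d) * g x) \<partial>mu) \<le> (\<integral>x. exp (r * g x) * ((1 + d\<^sup>2 * B\<^sup>2) + d * g x) \<partial>mu)"
  proof (intro integral_mono int_e int_eg)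
    fix x
    have "\<bar>d * g x\<bar> \<le> \<bar>d\<bar> * B" using gB[of x] by (simp add: abs_mult mult_left_mono)
    then have dg: "\<bar>d * g x\<bar> \<le> 1" using assms by linarith
    have "(d * g x)\<^sup>2 \<le> d\<^sup>2 * B\<^sup>2"
    proof -
      have "\<bar>d * g x\<bar> \<le> \<bar>d\<bar> * B" using gB[of x] by (simp add: abs_mult mult_left_mono)
      then have "\<bar>d * g x\<bar>\<^sup>2 \<le> (\<bar>d\<bar> * B)\<^sup>2" by (intro power_mono) auto
      then show ?thesis by (simp add: power_mult_distrib)
    qed
    then have "exp (d * g x) \<le> (1 + d\<^sup>2 * B\<^sup>2) + d * g x" using exp_quad[OF dg] by linarith
    then have "exp (r * g x) * exp (d * g x) \<le> exp (r * g x) * ((1 + d\<^sup>2 * B\<^sup>2) + d * g x)"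
      by (intro mult_left_mono) auto
    then show "exp ((r + d) * g x) \<le> exp (r * g x) * ((1 + d\<^sup>2 * B\<^sup>2) + d * g x)"
      by (simp add: distrib_right exp_add)
  qed
  also have "\<dots> = (1 + d\<^sup>2 * B\<^sup>2) * (\<integral>x. exp (r * g x) \<partial>mu) + d * (\<integral>x. g x * exp (r * g x) \<partial>mu)"
    using int_e int_ge by (simp add: algebra_simps)
  finally show ?thesis .
qed

lemma m_pos:
  assumes k: "\<kappa> > 0" and phi1: "(\<integral>x. exp (\<kappa> * g x) \<partial>mu) = 1" and g0: "(\<integral>x. g x \<partial>mu) \<noteq> 0"
  shows "(\<integral>x. g x * exp (\<kappa> * g x) \<partial>mu) > 0"
proof -
  interpret prob_space mu by (rule mu)
  define F where "F x = exp (\<kappa> * g x) * (exp (- \<kappa> * g x) - 1 + \<kappa> * g x)" for x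
  have F: "F x = 1 - exp (\<kappa> * g x) + \<kappa> * (g x * exp (\<kappa> * g x))" for x
    by (simp add: F_def algebra_simps flip: exp_add)
  have intF: "integrable mu F" unfolding F using int_e int_ge by auto
  have "(\<integral>x. F x \<partial>mu) = 1 - 1 + \<kappa> * (\<integral>x. g x * exp (\<kappa> * g x) \<partial>mu)"
    unfolding F using int_e int_ge phi1 by (simp add: prob_space)
  then have IF: "(\<integral>x. F x \<partial>mu) = \<kappa> * (\<integral>x. g x * exp (\<kappa> * g x) \<partial>mu)" by simp
  have Fnn: "0 \<le> F x" for x
    unfolding F_def using exp_ge_add_one_self[of "- \<kappa> * g x"] by (intro mult_nonneg_nonneg) auto
  have "(\<integral>x. F x \<partial>mu) \<noteq> 0"
  proof
    assume "(\<integral>x. F x \<partial>mu) = 0"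
    then have "AE x in mu. F x = 0"
      using integral_nonneg_eq_0_iff_AE[OF intF] Fnn by auto
    then have "AE x in mu. g x = 0"
    proof (rule AE_mp, intro AE_I2 impI)
      fix x assume "F x = 0"
      then have "exp (- \<kappa> * g x) = 1 + (- \<kappa> * g x)" unfolding F_def by simp
      then have "- \<kappa> * g x = 0" using exp_strict[of "- \<kappa> * g x"] by (cases "- \<kappa> * g x = 0") auto
      then show "g x = 0" using k by simp
    qed
    then have "(\<integral>x. g x \<partial>mu) = (\<integral>x. 0 \<partial>mu)" by (intro integral_cong_AE) (use gm in auto)
    then show False using g0 by simp
  qed
  moreover have "0 \<le> (\<integral>x. F x \<partial>mu)" using Fnn by (intro integral_nonneg_AE) auto
  ultimately show ?thesis using IF k by (simp add: zero_less_mult_iff order_le_less)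
qed


abbreviation "PM \<equiv> PiM (UNIV::int set) (\<lambda>_. mu)"

lemma comp_meas[measurable]: "(\<lambda>\<omega>. \<omega> i) \<in> measurable PM mu"
  by (rule measurable_component_singleton) simp

lemma exp_bounded: "\<bar>exp (t * g x)\<bar> \<le> exp (\<bar>t\<bar> * B)"
proof -
  have "\<bar>t * g x\<bar> \<le> \<bar>t\<bar> * B" using gB[of x] by (simp add: abs_mult mult_left_mono)
  then show ?thesis by simp
qed

lemma int_comp: "integrable PM (\<lambda>\<omega>. exp (t * g (\<omega> i)))"
proof -
  interpret Q: prob_space PM by (rule psM[OF mu])
  show ?thesis
    by (rule Q.integrable_const_bound[where B="exp (\<bar>t\<bar> * B)"]) (use exp_bounded in auto)
qed

lemma int_comp_eq: "(\<integral>\<omega>. exp (t * g (\<omega> i)) \<partial>PM) = (\<integral>x. exp (t * g x) \<partial>mu)"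
proof -
  interpret product_prob_space "\<lambda>_::int. mu" "UNIV::int set" by (rule pps[OF mu])
  have "distr PM mu (\<lambda>\<omega>. \<omega> i) = mu" using PiM_component[of i] by simp
  then have "(\<integral>x. exp (t * g x) \<partial>mu) = (\<integral>x. exp (t * g x) \<partial>distr PM mu (\<lambda>\<omega>. \<omega> i))" by simp
  also have "\<dots> = (\<integral>\<omega>. exp (t * g (\<omega> i)) \<partial>PM)" by (rule integral_distr) auto
  finally show ?thesis by simp
qed

lemma exp_sum_int:
  assumes J: "finite J"
  shows "(\<integral>\<omega>. exp (t * (\<Sum>i\<in>J. g (\<omega> i))) \<partial>PM) = (\<integral>x. exp (t * g x) \<partial>mu) ^ card J"
proof -
  interpret Q: prob_space PM by (rule psM[OF mu])
  have "Q.indep_vars (\<lambda>_. mu) (\<lambda>i \<omega>. \<omega> i) J"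
    by (rule Q.indep_vars_subset[OF coord_indep[OF mu]]) auto
  then have ind: "Q.indep_vars (\<lambda>_. borel) (\<lambda>i \<omega>. exp (t * g (\<omega> i))) J"
    by (rule Q.indep_vars_compose2[where Y="\<lambda>i x. exp (t * g x)"]) auto
  have "(\<integral>\<omega>. exp (t * (\<Sum>i\<in>J. g (\<omega> i))) \<partial>PM) = (\<integral>\<omega>. (\<Prod>i\<in>J. exp (t * g (\<omega> i))) \<partial>PM)"
    using J by (simp add: sum_distrib_left exp_sum)
  also have "\<dots> = (\<Prod>i\<in>J. \<integral>\<omega>. exp (t * g (\<omega> i)) \<partial>PM)"
    by (rule Q.indep_vars_lebesgue_integral[OF J ind int_comp])
  also have "\<dots> = (\<integral>x. exp (t * g x) \<partial>mu) ^ card J"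
    by (simp add: int_comp_eq)
  finally show ?thesis .
qed

lemma int_sum_exp: "finite J \<Longrightarrow> integrable PM (\<lambda>\<omega>. exp (t * (\<Sum>i\<in>J. g (\<omega> i))))"
proof -
  assume J: "finite J"
  interpret Q: prob_space PM by (rule psM[OF mu])
  have "Q.indep_vars (\<lambda>_. mu) (\<lambda>i \<omega>. \<omega> i) J"
    by (rule Q.indep_vars_subset[OF coord_indep[OF mu]]) auto
  then have ind: "Q.indep_vars (\<lambda>_. borel) (\<lambda>i \<omega>. exp (t * g (\<omega> i))) J"
    by (rule Q.indep_vars_compose2[where Y="\<lambda>i x. exp (t * g x)"]) auto
  have "integrable PM (\<lambda>\<omega>. (\<Prod>i\<in>J. exp (t * g (\<omega> i))))"
    by (rule Q.indep_vars_integrable[OF J ind int_comp])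
  then show ?thesis using J by (simp add: sum_distrib_left exp_sum)
qed

lemma rare_ineq:
  assumes J: "finite J" and t: "t \<le> \<kappa>" and s: "\<kappa> \<le> s" and k0: "0 \<le> \<kappa>"
    and phi1: "(\<integral>x. exp (\<kappa> * g x) \<partial>mu) = 1"
  shows "1 \<le> (\<integral>x. exp (t * g x) \<partial>mu) ^ card J * exp ((\<kappa> - t) * h)
           + exp (\<kappa> * H) * measure PM {\<omega> \<in> space PM. h \<le> (\<Sum>i\<in>J. g (\<omega> i))}
           + (\<integral>x. exp (s * g x) \<partial>mu) ^ card J * exp (- ((s - \<kappa>) * H))"
proof -
  interpret Q: prob_space PM by (rule psM[OF mu])
  define S where "S \<omega> = (\<Sum>i\<in>J. g (\<omega> i))" for \<omega>
  define A where "A = {\<omega> \<in> space PM. h \<le> S \<omega>}"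
  have Sm[measurable]: "S \<in> borel_measurable PM" unfolding S_def by measurable
  have Am[measurable]: "A \<in> sets PM" unfolding A_def by measurable
  have pw: "exp (\<kappa> * S \<omega>) \<le> exp (t * S \<omega>) * exp ((\<kappa> - t) * h) + exp (\<kappa> * H) * indicator A \<omega>
             + exp (s * S \<omega>) * exp (- ((s - \<kappa>) * H))" if "\<omega> \<in> space PM" for \<omega>
  proof (cases "S \<omega> < h")
    case True
    have "\<kappa> * S \<omega> \<le> t * S \<omega> + (\<kappa> - t) * h"
    proof -
      have "(\<kappa> - t) * S \<omega> \<le> (\<kappa> - t) * h" using True t by (intro mult_left_mono) auto
      then show ?thesis by (simp add: algebra_simps)
    qed
    then have e: "exp (\<kappa> * S \<omega>) \<le> exp (t * S \<omega>) * exp ((\<kappa> - t) * h)" by (simp flip: exp_add)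
    show ?thesis
    proof -
      have "0 \<le> exp (\<kappa> * H) * indicator A \<omega>" "0 \<le> exp (s * S \<omega>) * exp (- ((s - \<kappa>) * H))"
        "0 \<le> exp (t * S \<omega>) * exp ((\<kappa> - t) * h)" by auto
      then show ?thesis using e by linarith
    qed
  next
    case False
    then have "\<omega> \<in> A" using that by (simp add: A_def)
    show ?thesis
    proof (cases "S \<omega> \<le> H")
      case True
      then have e: "exp (\<kappa> * S \<omega>) \<le> exp (\<kappa> * H) * indicator A \<omega>"
        using \<open>\<omega> \<in> A\<close> k0 by (simp add: indicator_def mult_left_mono)
    show ?thesis
    proof -
      have "0 \<le> exp (\<kappa> * H) * indicator A \<omega>" "0 \<le> exp (s * S \<omega>) * exp (- ((s - \<kappa>) * H))"
        "0 \<le> exp (t * S \<omega>) * exp ((\<kappa> - t) * h)" by auto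
      then show ?thesis using e by linarith
    qed
    next
      case False
      have "\<kappa> * S \<omega> \<le> s * S \<omega> - (s - \<kappa>) * H"
      proof -
        have "(s - \<kappa>) * H \<le> (s - \<kappa>) * S \<omega>" using False s by (intro mult_left_mono) auto
        then show ?thesis by (simp add: algebra_simps)
      qed
      then have e: "exp (\<kappa> * S \<omega>) \<le> exp (s * S \<omega>) * exp (- ((s - \<kappa>) * H))" by (simp flip: exp_add)
      show ?thesis
      proof -
      have "0 \<le> exp (\<kappa> * H) * indicator A \<omega>" "0 \<le> exp (s * S \<omega>) * exp (- ((s - \<kappa>) * H))"
        "0 \<le> exp (t * S \<omega>) * exp ((\<kappa> - t) * h)" by auto
      then show ?thesis using e by linarith
    qed
    qed
  qed
  have iS: "integrable PM (\<lambda>\<omega>. exp (r * S \<omega>))" for r unfolding S_def by (rule int_sum_exp[OF J])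
  have iA: "integrable PM (indicator A :: _ \<Rightarrow> real)" by (rule Q.integrable_const_bound[where B=1]) auto
  have "1 = (\<integral>\<omega>. exp (\<kappa> * S \<omega>) \<partial>PM)" unfolding S_def using exp_sum_int[OF J, of \<kappa>] phi1 by simp
  also have "\<dots> \<le> (\<integral>\<omega>. exp (t * S \<omega>) * exp ((\<kappa> - t) * h) + exp (\<kappa> * H) * indicator A \<omega>
             + exp (s * S \<omega>) * exp (- ((s - \<kappa>) * H)) \<partial>PM)"
    by (intro integral_mono_AE) (use iS iA pw in auto)
  also have "\<dots> = (\<integral>\<omega>. exp (t * S \<omega>) \<partial>PM) * exp ((\<kappa> - t) * h) + exp (\<kappa> * H) * measure PM A
             + (\<integral>\<omega>. exp (s * S \<omega>) \<partial>PM) * exp (- ((s - \<kappa>) * H))"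
    using iS iA by (simp)
  finally show ?thesis unfolding S_def A_def by (simp add: exp_sum_int[OF J])
qed

lemma typ_ineq:
  assumes J: "finite J" and t: "0 \<le> t"
  shows "1 \<le> measure PM {\<omega> \<in> space PM. (\<Sum>i\<in>J. g (\<omega> i)) \<le> - h}
           + (\<integral>x. exp (t * g x) \<partial>mu) ^ card J * exp (t * h)"
proof -
  interpret Q: prob_space PM by (rule psM[OF mu])
  define S where "S \<omega> = (\<Sum>i\<in>J. g (\<omega> i))" for \<omega>
  define A where "A = {\<omega> \<in> space PM. S \<omega> \<le> - h}"
  have Sm[measurable]: "S \<in> borel_measurable PM" unfolding S_def by measurable
  have Am[measurable]: "A \<in> sets PM" unfolding A_def by measurable
  have pw: "1 \<le> indicator A \<omega> + exp (t * S \<omega>) * exp (t * h)" if "\<omega> \<in> space PM" for \<omega>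
  proof (cases "S \<omega> \<le> - h")
    case True then show ?thesis using that by (simp add: A_def indicator_def)
  next
    case False
    then have "0 \<le> t * (S \<omega> + h)" using t by (intro mult_nonneg_nonneg) auto
    then have "0 \<le> t * S \<omega> + t * h" by (simp add: algebra_simps)
    then have "1 \<le> exp (t * S \<omega>) * exp (t * h)" by (simp flip: exp_add)
    then show ?thesis by (simp add: indicator_def)
  qed
  have iS: "integrable PM (\<lambda>\<omega>. exp (r * S \<omega>))" for r unfolding S_def by (rule int_sum_exp[OF J])
  have iA: "integrable PM (indicator A :: _ \<Rightarrow> real)" by (rule Q.integrable_const_bound[where B=1]) auto
  have "(1::real) = (\<integral>\<omega>. 1 \<partial>PM)" using Q.prob_space by simp
  also have "\<dots> \<le> (\<integral>\<omega>. indicator A \<omega> + exp (t * S \<omega>) * exp (t * h) \<partial>PM)"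
    by (intro integral_mono_AE) (use iS iA pw in auto)
  also have "\<dots> = measure PM A + (\<integral>\<omega>. exp (t * S \<omega>) \<partial>PM) * exp (t * h)"
    using iS iA by simp
  finally show ?thesis unfolding S_def A_def by (simp add: exp_sum_int[OF J])
qed


lemma pow_exp_bound:
  assumes "0 \<le> p" "p \<le> 1 + x"
  shows "p ^ L \<le> exp (x * real L)"
proof -
  have "p \<le> exp x" using assms exp_ge_add_one_self[of x] by linarith
  then have "p ^ L \<le> exp x ^ L" using assms by (intro power_mono) auto
  also have "\<dots> = exp (x * real L)" by (simp add: exp_of_nat_mult[symmetric] mult.commute)
  finally show ?thesis .
qed

lemma phi_nonneg: "0 \<le> (\<integral>x. exp (t * g x) \<partial>mu)"
  by (intro integral_nonneg_AE) auto

lemma rare_exists: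
  assumes k: "\<kappa> > 0" and phi1: "(\<integral>x. exp (\<kappa> * g x) \<partial>mu) = 1" and g0: "(\<integral>x. g x \<partial>mu) \<noteq> 0"
    and r: "r > 1"
  shows "\<exists>A c0. A > 0 \<and> c0 > 0 \<and> (\<forall>h\<ge>0. \<exists>L::nat. 1 \<le> L \<and> real L \<le> A * h + A \<and>
    (\<forall>J. finite J \<longrightarrow> card J = L \<longrightarrow>
       c0 * exp (- (\<kappa> * r * h)) \<le> measure PM {\<omega> \<in> space PM. h \<le> (\<Sum>i\<in>J. g (\<omega> i))}))"
proof -
  define m where "m = (\<integral>x. g x * exp (\<kappa> * g x) \<partial>mu)"
  have m: "m > 0" unfolding m_def by (rule m_pos[OF k phi1 g0])
  have B0: "B > 0" using B1 by simp
  define \<delta> where "\<delta> = min (1 / B) (m * (r - 1) / ((r + 1) * B\<^sup>2))"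
  have d0: "\<delta> > 0" unfolding \<delta>_def using m r B0 by auto
  have dB: "\<delta> * B \<le> 1" unfolding \<delta>_def using B0 by (simp add: min_def field_simps)
  have dB2: "\<delta> * B\<^sup>2 * (r + 1) \<le> m * (r - 1)"
  proof -
    have pos: "(r + 1) * B\<^sup>2 > 0" using B0 r by simp
    have "\<delta> \<le> m * (r - 1) / ((r + 1) * B\<^sup>2)" unfolding \<delta>_def by simp
    then have "\<delta> * ((r + 1) * B\<^sup>2) \<le> m * (r - 1)" using pos by (simp add: pos_le_divide_eq)
    then show ?thesis by (simp add: algebra_simps)
  qed
  define a1 where "a1 = m - \<delta> * B\<^sup>2"
  define a2 where "a2 = m + \<delta> * B\<^sup>2"
  have a1: "a1 > 0"
  proof -
    have "m * (r - 1) < m * (r + 1)" using m by (intro mult_strict_left_mono) auto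
    then have "(\<delta> * B\<^sup>2) * (r + 1) < m * (r + 1)" using dB2 by linarith
    then have "\<delta> * B\<^sup>2 < m" using r by (simp add: mult_less_cancel_right)
    then show ?thesis unfolding a1_def by simp
  qed
  have a21: "a2 \<le> r * a1" using dB2 unfolding a1_def a2_def by (simp add: algebra_simps)
  have a2: "a2 > 0" using m d0 unfolding a2_def by (simp add: add_pos_nonneg)
  define pt where "pt = (\<integral>x. exp ((\<kappa> - \<delta>) * g x) \<partial>mu)"
  define ps where "ps = (\<integral>x. exp ((\<kappa> + \<delta>) * g x) \<partial>mu)"
  have pt: "pt \<le> 1 + (- \<delta> * a1)"
  proof -
    have "pt \<le> (1 + (-\<delta>)\<^sup>2 * B\<^sup>2) * (\<integral>x. exp (\<kappa> * g x) \<partial>mu) + (-\<delta>) * m"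
      unfolding pt_def m_def using phi_bound[of "-\<delta>" \<kappa>] dB d0 by simp
    then show ?thesis using phi1 unfolding a1_def by (simp add: algebra_simps power2_eq_square)
  qed
  have ps: "ps \<le> 1 + \<delta> * a2"
  proof -
    have "ps \<le> (1 + \<delta>\<^sup>2 * B\<^sup>2) * (\<integral>x. exp (\<kappa> * g x) \<partial>mu) + \<delta> * m"
      unfolding ps_def m_def using phi_bound[of "\<delta>" \<kappa>] dB d0 by simp
    then show ?thesis using phi1 unfolding a2_def by (simp add: algebra_simps power2_eq_square)
  qed
  define C1 where "C1 = 2 * r / \<delta> + a2 + 2 / \<delta>"
  define A where "A = max (1 / a1) (2 / (\<delta> * a1) + 1)"
  define c0 where "c0 = exp (- (\<kappa> * C1)) / 2"
  have "1 / a1 > 0" using a1 by simp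
  then have A0: "A > 0" unfolding A_def by linarith
  have c00: "c0 > 0" unfolding c0_def by simp
  have main: "\<exists>L::nat. 1 \<le> L \<and> real L \<le> A * h + A \<and>
    (\<forall>J. finite J \<longrightarrow> card J = L \<longrightarrow>
       c0 * exp (- (\<kappa> * r * h)) \<le> measure PM {\<omega> \<in> space PM. h \<le> (\<Sum>i\<in>J. g (\<omega> i))})"
    if h: "h \<ge> 0" for h
  proof -
    define x where "x = (h + 2 / \<delta>) / a1"
    have "h + 2 / \<delta> > 0" using h d0 by (simp add: add_nonneg_pos)
    then have x0: "x > 0" unfolding x_def using a1 by (intro divide_pos_pos) auto
    define L where "L = nat \<lceil>x\<rceil>"
    have Lx: "x \<le> real L" "real L \<le> x + 1" unfolding L_def using x0 by linarith+
    have L1: "1 \<le> L" unfolding L_def using x0 by linarith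
    have LA: "real L \<le> A * h + A"
    proof -
      have "x + 1 = h * (1/a1) + (2 / (\<delta> * a1) + 1)" unfolding x_def using a1 d0 by (simp add: field_simps)
      also have "\<dots> \<le> h * A + A" unfolding A_def using h by (intro add_mono mult_left_mono) auto
      finally show ?thesis using Lx by (simp add: mult.commute)
    qed
    define H where "H = real L * a2 + 2 / \<delta>"
    have HC: "H \<le> r * h + C1"
    proof -
      have "real L * a2 \<le> (x + 1) * a2" using Lx a2 by (intro mult_right_mono) auto
      also have "\<dots> = (h + 2/\<delta>) * (a2 / a1) + a2" unfolding x_def using a1 by (simp add: field_simps)
      also have "\<dots> \<le> (h + 2/\<delta>) * r + a2"
        using a21 a1 h d0 by (intro add_mono mult_left_mono) (auto simp: field_simps)
      finally show ?thesis unfolding H_def C1_def by (simp add: algebra_simps)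
    qed
    have "\<forall>J. finite J \<longrightarrow> card J = L \<longrightarrow>
       c0 * exp (- (\<kappa> * r * h)) \<le> measure PM {\<omega> \<in> space PM. h \<le> (\<Sum>i\<in>J. g (\<omega> i))}"
    proof (intro allI impI)
      fix J :: "int set" assume J: "finite J" "card J = L"
      define P where "P = measure PM {\<omega> \<in> space PM. h \<le> (\<Sum>i\<in>J. g (\<omega> i))}"
      have ineq: "1 \<le> pt ^ L * exp ((\<kappa> - (\<kappa> - \<delta>)) * h) + exp (\<kappa> * H) * P + ps ^ L * exp (- ((\<kappa> + \<delta> - \<kappa>) * H))"
        using rare_ineq[OF J(1), of "\<kappa> - \<delta>" \<kappa> "\<kappa> + \<delta>" h H] d0 k phi1 J(2)
        unfolding pt_def ps_def P_def by simp
      have t1: "pt ^ L * exp ((\<kappa> - (\<kappa> - \<delta>)) * h) \<le> 1/4"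
      proof -
        have "pt ^ L \<le> exp ((- \<delta> * a1) * real L)"
          by (rule pow_exp_bound) (use pt phi_nonneg in \<open>auto simp: pt_def\<close>)
        then have "pt ^ L * exp (\<delta> * h) \<le> exp ((- \<delta> * a1) * real L) * exp (\<delta> * h)"
          by (intro mult_right_mono) auto
        also have "\<dots> = exp (\<delta> * (h - a1 * real L))" by (simp add: algebra_simps flip: exp_add)
        also have "\<dots> \<le> exp (-2)"
        proof -
          have "a1 * x \<le> a1 * real L" using Lx a1 by (intro mult_left_mono) auto
          moreover have "a1 * x = h + 2/\<delta>" unfolding x_def using a1 by simp
          ultimately have "h - a1 * real L \<le> - 2 / \<delta>" by simp
          then have "\<delta> * (h - a1 * real L) \<le> \<delta> * (-2/\<delta>)" using d0 by (intro mult_left_mono) auto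
          then show ?thesis using d0 by simp
        qed
        finally show ?thesis using exp_m2 by simp
      qed
      have t3: "ps ^ L * exp (- ((\<kappa> + \<delta> - \<kappa>) * H)) \<le> 1/4"
      proof -
        have "ps ^ L \<le> exp ((\<delta> * a2) * real L)"
          by (rule pow_exp_bound) (use ps phi_nonneg in \<open>auto simp: ps_def\<close>)
        then have "ps ^ L * exp (- (\<delta> * H)) \<le> exp ((\<delta> * a2) * real L) * exp (- (\<delta> * H))"
          by (intro mult_right_mono) auto
        also have "\<dots> = exp (-2)" unfolding H_def using d0 by (simp add: algebra_simps flip: exp_add)
        finally show ?thesis using exp_m2 by simp
      qed
      have "1/2 \<le> exp (\<kappa> * H) * P" using ineq t1 t3 by linarith
      then have "exp (- (\<kappa> * H)) / 2 \<le> P"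
        by (simp add: exp_minus field_simps)
      moreover have "c0 * exp (- (\<kappa> * r * h)) \<le> exp (- (\<kappa> * H)) / 2"
      proof -
        have "\<kappa> * H \<le> \<kappa> * (r * h + C1)" using HC k by (intro mult_left_mono) auto
        then have "exp (- (\<kappa> * C1)) * exp (- (\<kappa> * r * h)) \<le> exp (- (\<kappa> * H))"
          by (simp add: algebra_simps flip: exp_add)
        then show ?thesis unfolding c0_def by simp
      qed
      ultimately show "c0 * exp (- (\<kappa> * r * h)) \<le> measure PM {\<omega> \<in> space PM. h \<le> (\<Sum>i\<in>J. g (\<omega> i))}"
        unfolding P_def by linarith
    qed
    then show ?thesis using L1 LA by blast
  qed
  show ?thesis using A0 c00 main by blast
qed

lemma typ_exists:
  assumes g0: "(\<integral>x. g x \<partial>mu) < 0"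
  shows "\<exists>A. A > 0 \<and> (\<forall>h\<ge>0. \<exists>L::nat. 1 \<le> L \<and> real L \<le> A * h + A \<and>
    (\<forall>J. finite J \<longrightarrow> card J = L \<longrightarrow>
       1/2 \<le> measure PM {\<omega> \<in> space PM. (\<Sum>i\<in>J. g (\<omega> i)) \<le> - h}))"
proof -
  interpret prob_space mu by (rule mu)
  define e where "e = (\<integral>x. g x \<partial>mu)"
  have e: "e < 0" using g0 unfolding e_def .
  have B0: "B > 0" using B1 by simp
  define \<delta> where "\<delta> = min (1 / B) (- e / (2 * B\<^sup>2))"
  have "- e / (2 * B\<^sup>2) > 0" using e B0 by (intro divide_pos_pos) auto
  then have d0: "\<delta> > 0" unfolding \<delta>_def using B0 by auto
  have dB: "\<delta> * B \<le> 1" unfolding \<delta>_def using B0 by (simp add: min_def field_simps)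
  have dB2: "\<delta> * B\<^sup>2 \<le> - e / 2" unfolding \<delta>_def using B0
    by (auto simp: min_def field_simps)
  define pt where "pt = (\<integral>x. exp (\<delta> * g x) \<partial>mu)"
  have pt: "pt \<le> 1 + \<delta> * e / 2"
  proof -
    have "pt \<le> (1 + \<delta>\<^sup>2 * B\<^sup>2) * (\<integral>x. exp (0 * g x) \<partial>mu) + \<delta> * (\<integral>x. g x * exp (0 * g x) \<partial>mu)"
      unfolding pt_def using phi_bound[of "\<delta>" 0] dB d0 by simp
    then have "pt \<le> 1 + \<delta> * (\<delta> * B\<^sup>2) + \<delta> * e" unfolding e_def using prob_space
      by (simp add: algebra_simps power2_eq_square)
    moreover have "\<delta> * (\<delta> * B\<^sup>2) \<le> \<delta> * (- e / 2)" using dB2 d0 by (intro mult_left_mono) auto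
    ultimately show ?thesis by (simp add: algebra_simps)
  qed
  define A where "A = max (2 / (- e)) (4 / (\<delta> * (- e)) + 1)"
  have "2 / (- e) > 0" using e by (intro divide_pos_pos) auto
  then have A0: "A > 0" unfolding A_def by linarith
  have main: "\<exists>L::nat. 1 \<le> L \<and> real L \<le> A * h + A \<and>
    (\<forall>J. finite J \<longrightarrow> card J = L \<longrightarrow>
       1/2 \<le> measure PM {\<omega> \<in> space PM. (\<Sum>i\<in>J. g (\<omega> i)) \<le> - h})"
    if h: "h \<ge> 0" for h
  proof -
    define x where "x = 2 * (h + 2 / \<delta>) / (- e)"
    have "2 * (h + 2 / \<delta>) > 0" using h d0 by (simp add: add_nonneg_pos)
    then have x0: "x > 0" unfolding x_def using e by (intro divide_pos_pos) auto
    define L where "L = nat \<lceil>x\<rceil>"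
    have Lx: "x \<le> real L" "real L \<le> x + 1" unfolding L_def using x0 by linarith+
    have L1: "1 \<le> L" unfolding L_def using x0 by linarith
    have LA: "real L \<le> A * h + A"
    proof -
      have "x + 1 = h * (2 / (- e)) + (4 / (\<delta> * (- e)) + 1)" unfolding x_def using e d0 by (simp add: field_simps)
      also have "\<dots> \<le> h * A + A" unfolding A_def using h by (intro add_mono mult_left_mono) auto
      finally show ?thesis using Lx by (simp add: mult.commute)
    qed
    have "\<forall>J. finite J \<longrightarrow> card J = L \<longrightarrow>
       1/2 \<le> measure PM {\<omega> \<in> space PM. (\<Sum>i\<in>J. g (\<omega> i)) \<le> - h}"
    proof (intro allI impI)
      fix J :: "int set" assume J: "finite J" "card J = L"
      define P where "P = measure PM {\<omega> \<in> space PM. (\<Sum>i\<in>J. g (\<omega> i)) \<le> - h}"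
      have ineq: "1 \<le> P + pt ^ L * exp (\<delta> * h)"
        using typ_ineq[OF J(1), of \<delta> h] d0 J(2) unfolding pt_def P_def by simp
      have "pt ^ L \<le> exp ((\<delta> * e / 2) * real L)"
        by (rule pow_exp_bound) (use pt phi_nonneg in \<open>auto simp: pt_def\<close>)
      then have "pt ^ L * exp (\<delta> * h) \<le> exp ((\<delta> * e / 2) * real L) * exp (\<delta> * h)"
        by (intro mult_right_mono) auto
      also have "\<dots> = exp (\<delta> * (h + e / 2 * real L))" by (simp add: algebra_simps flip: exp_add)
      also have "\<dots> \<le> exp (-2)"
      proof -
        have "(- e / 2) * x \<le> (- e / 2) * real L" using Lx e by (intro mult_left_mono) auto
        moreover have "(- e / 2) * x = h + 2/\<delta>" unfolding x_def using e by simp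
        ultimately have "h + e / 2 * real L \<le> - 2 / \<delta>" by simp
        then have "\<delta> * (h + e / 2 * real L) \<le> \<delta> * (-2/\<delta>)" using d0 by (intro mult_left_mono) auto
        then show ?thesis using d0 by simp
      qed
      finally have "pt ^ L * exp (\<delta> * h) \<le> 1/4" using exp_m2 by simp
      then show "1/2 \<le> P" using ineq by linarith
    qed
    then show ?thesis using L1 LA by blast
  qed
  show ?thesis using A0 main by blast
qed


lemma sum_restrict: "S \<subseteq> K \<Longrightarrow> (\<Sum>i\<in>S. g (restrict \<omega> K i)) = (\<Sum>i\<in>S. g (\<omega> i))"
  by (intro sum.cong) auto

lemma sum_meas_block: "S \<subseteq> K \<Longrightarrow> (\<lambda>x. \<Sum>i\<in>S. g (x i)) \<in> borel_measurable (PiM K (\<lambda>_. mu))"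
proof -
  assume SK: "S \<subseteq> K"
  show ?thesis
  proof (rule borel_measurable_sum)
    fix i assume "i \<in> S"
    then have "(\<lambda>x. x i) \<in> measurable (PiM K (\<lambda>_. mu)) mu" using SK
      by (intro measurable_component_singleton) auto
    then show "(\<lambda>x. g (x i)) \<in> borel_measurable (PiM K (\<lambda>_. mu))"
      by (rule measurable_compose) (rule gm)
  qed
qed

lemma int_if: "{\<omega>\<in>space PM. P \<omega>} \<in> sets PM \<Longrightarrow> (\<integral>\<omega>. (if P \<omega> then 1 else 0::real) \<partial>PM) = measure PM {\<omega>\<in>space PM. P \<omega>}"
proof -
  assume "{\<omega>\<in>space PM. P \<omega>} \<in> sets PM"
  have "(\<integral>\<omega>. (if P \<omega> then 1 else 0::real) \<partial>PM) = (\<integral>\<omega>. indicator {\<omega>\<in>space PM. P \<omega>} \<omega> \<partial>PM)"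
    by (rule Bochner_Integration.integral_cong) (auto simp: indicator_def)
  also have "\<dots> = measure PM {\<omega>\<in>space PM. P \<omega>}"
  proof -
    have "{\<omega>\<in>space PM. P \<omega>} \<inter> space PM = {\<omega>\<in>space PM. P \<omega>}" by auto
    then show ?thesis by simp
  qed
  finally show ?thesis .
qed

lemma prob_and:
  assumes fin: "finite SA" "finite SB" and disj: "SA \<inter> SB = {}"
  shows "measure PM {\<omega>\<in>space PM. (\<Sum>i\<in>SA. g (\<omega> i)) \<le> - h \<and> h \<le> (\<Sum>i\<in>SB. g (\<omega> i))} =
         measure PM {\<omega>\<in>space PM. (\<Sum>i\<in>SA. g (\<omega> i)) \<le> - h} * measure PM {\<omega>\<in>space PM. h \<le> (\<Sum>i\<in>SB. g (\<omega> i))}"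
proof -
  define K where "K b = (if b then SA else SB)" for b
  define G where "G b x = (if b then (if (\<Sum>i\<in>SA. g (x i)) \<le> - h then 1 else 0)
                               else (if h \<le> (\<Sum>i\<in>SB. g (x i)) then 1 else (0::real)))" for b x
  have dj: "disjoint_family_on K UNIV" using disj unfolding K_def disjoint_family_on_def by auto
  have Gm: "G b \<in> borel_measurable (PiM (K b) (\<lambda>_. mu))" for b
  proof (cases b)
    case True
    have [measurable]: "(\<lambda>x. \<Sum>i\<in>SA. g (x i)) \<in> borel_measurable (PiM SA (\<lambda>_. mu))" by (rule sum_meas_block) auto
    have "G b = (\<lambda>x. if (\<Sum>i\<in>SA. g (x i)) \<le> - h then 1 else 0)" "K b = SA"
      using True unfolding G_def K_def by auto
    then show ?thesis by simp
  next
    case False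
    have [measurable]: "(\<lambda>x. \<Sum>i\<in>SB. g (x i)) \<in> borel_measurable (PiM SB (\<lambda>_. mu))" by (rule sum_meas_block) auto
    have "G b = (\<lambda>x. if h \<le> (\<Sum>i\<in>SB. g (x i)) then 1 else 0)" "K b = SB"
      using False unfolding G_def K_def by auto
    then show ?thesis by simp
  qed
  have Gb: "\<bar>G b x\<bar> \<le> 1" for b x unfolding G_def by auto
  have BI: "(\<integral>\<omega>. (\<Prod>b\<in>UNIV. G b (restrict \<omega> (K b))) \<partial>PM) = (\<Prod>b\<in>UNIV. \<integral>\<omega>. G b (restrict \<omega> (K b)) \<partial>PM)"
    by (rule block_integral[OF mu _ dj Gm Gb]) auto
  have GT: "G True (restrict \<omega> (K True)) = (if (\<Sum>i\<in>SA. g (\<omega> i)) \<le> - h then 1 else 0)" for \<omega>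
    unfolding G_def K_def by (simp add: sum_restrict)
  have GF: "G False (restrict \<omega> (K False)) = (if h \<le> (\<Sum>i\<in>SB. g (\<omega> i)) then 1 else 0)" for \<omega>
    unfolding G_def K_def by (simp add: sum_restrict)
  have UNIV_bool: "(UNIV :: bool set) = {True, False}" by auto
  have "(\<integral>\<omega>. (if (\<Sum>i\<in>SA. g (\<omega> i)) \<le> - h \<and> h \<le> (\<Sum>i\<in>SB. g (\<omega> i)) then 1 else (0::real)) \<partial>PM) =
        (\<integral>\<omega>. (if (\<Sum>i\<in>SA. g (\<omega> i)) \<le> - h then 1 else (0::real)) \<partial>PM) * (\<integral>\<omega>. (if h \<le> (\<Sum>i\<in>SB. g (\<omega> i)) then 1 else (0::real)) \<partial>PM)"
  proof -
    have ifm: "\<And>P Q. (if P then 1 else (0::real)) * (if Q then 1 else 0) = (if P \<and> Q then 1 else 0)" by auto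
    show ?thesis using BI unfolding UNIV_bool by (simp add: GT GF ifm)
  qed
  moreover have "{\<omega>\<in>space PM. (\<Sum>i\<in>SA. g (\<omega> i)) \<le> - h \<and> h \<le> (\<Sum>i\<in>SB. g (\<omega> i))} \<in> sets PM" by measurable
  moreover have "{\<omega>\<in>space PM. (\<Sum>i\<in>SA. g (\<omega> i)) \<le> - h} \<in> sets PM" by measurable
  moreover have "{\<omega>\<in>space PM. h \<le> (\<Sum>i\<in>SB. g (\<omega> i))} \<in> sets PM" by measurable
  ultimately show ?thesis by (simp add: int_if)
qed


lemma prod_if_lt: "(\<Prod>j<(n::nat). (1 - (if P j then 1 else (0::real)))) = (if \<forall>j<n. \<not> P j then 1 else 0)"
  by (induction n) (auto simp: less_Suc_eq)

lemma fail_bound: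
  fixes K :: nat and SA SB KB :: "nat \<Rightarrow> int set"
  assumes fin: "\<And>j. finite (SA j)" "\<And>j. finite (SB j)"
    and sub: "\<And>j. SA j \<subseteq> KB j" "\<And>j. SB j \<subseteq> KB j" and dis: "\<And>j. SA j \<inter> SB j = {}"
    and dj: "disjoint_family_on KB {..<K}"
    and p: "\<And>j. j < K \<Longrightarrow> p \<le> measure PM {\<omega>\<in>space PM. (\<Sum>i\<in>SA j. g (\<omega> i)) \<le> - h} *
                                  measure PM {\<omega>\<in>space PM. h \<le> (\<Sum>i\<in>SB j. g (\<omega> i))}"
  shows "measure PM {\<omega>\<in>space PM. \<forall>j<K. \<not> ((\<Sum>i\<in>SA j. g (\<omega> i)) \<le> - h \<and> h \<le> (\<Sum>i\<in>SB j. g (\<omega> i)))}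
         \<le> exp (- p * real K)"
proof -
  interpret Q: prob_space PM by (rule psM[OF mu])
  define G where "G j x = 1 - (if (\<Sum>i\<in>SA j. g (x i)) \<le> - h \<and> h \<le> (\<Sum>i\<in>SB j. g (x i)) then 1 else (0::real))" for j x
  have Gm: "G j \<in> borel_measurable (PiM (KB j) (\<lambda>_. mu))" for j
  proof -
    have [measurable]: "(\<lambda>x. \<Sum>i\<in>SA j. g (x i)) \<in> borel_measurable (PiM (KB j) (\<lambda>_. mu))"
      by (rule sum_meas_block) (rule sub)
    have [measurable]: "(\<lambda>x. \<Sum>i\<in>SB j. g (x i)) \<in> borel_measurable (PiM (KB j) (\<lambda>_. mu))"
      by (rule sum_meas_block) (rule sub)
    show ?thesis unfolding G_def by measurable
  qed
  have Gb: "\<bar>G j x\<bar> \<le> 1" for j x unfolding G_def by auto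
  have GR: "G j (restrict \<omega> (KB j)) = G j \<omega>" for j \<omega>
    unfolding G_def by (simp only: sum_restrict[OF sub(1)] sum_restrict[OF sub(2)])
  have BI: "(\<integral>\<omega>. (\<Prod>j\<in>{..<K}. G j (restrict \<omega> (KB j))) \<partial>PM) = (\<Prod>j\<in>{..<K}. \<integral>\<omega>. G j (restrict \<omega> (KB j)) \<partial>PM)"
    by (rule block_integral[OF mu _ dj Gm Gb]) auto
  have lhs: "(\<integral>\<omega>. (\<Prod>j\<in>{..<K}. G j (restrict \<omega> (KB j))) \<partial>PM) =
      measure PM {\<omega>\<in>space PM. \<forall>j<K. \<not> ((\<Sum>i\<in>SA j. g (\<omega> i)) \<le> - h \<and> h \<le> (\<Sum>i\<in>SB j. g (\<omega> i)))}"
  proof -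
    have "(\<integral>\<omega>. (\<Prod>j\<in>{..<K}. G j (restrict \<omega> (KB j))) \<partial>PM) =
      (\<integral>\<omega>. (if \<forall>j<K. \<not> ((\<Sum>i\<in>SA j. g (\<omega> i)) \<le> - h \<and> h \<le> (\<Sum>i\<in>SB j. g (\<omega> i))) then 1 else 0) \<partial>PM)"
      unfolding GR unfolding G_def by (simp add: prod_if_lt)
    also have "\<dots> = measure PM {\<omega>\<in>space PM. \<forall>j<K. \<not> ((\<Sum>i\<in>SA j. g (\<omega> i)) \<le> - h \<and> h \<le> (\<Sum>i\<in>SB j. g (\<omega> i)))}"
      by (rule int_if) measurable
    finally show ?thesis .
  qed
  have each: "0 \<le> (\<integral>\<omega>. G j (restrict \<omega> (KB j)) \<partial>PM) \<and> (\<integral>\<omega>. G j (restrict \<omega> (KB j)) \<partial>PM) \<le> exp (- p)"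
    if j: "j < K" for j
  proof -
    have "(\<integral>\<omega>. G j (restrict \<omega> (KB j)) \<partial>PM) =
       (\<integral>\<omega>. 1 - (if (\<Sum>i\<in>SA j. g (\<omega> i)) \<le> - h \<and> h \<le> (\<Sum>i\<in>SB j. g (\<omega> i)) then 1 else (0::real)) \<partial>PM)"
      by (simp only: G_def sum_restrict[OF sub(1)] sum_restrict[OF sub(2)])
    also have "\<dots> = 1 - (\<integral>\<omega>. (if (\<Sum>i\<in>SA j. g (\<omega> i)) \<le> - h \<and> h \<le> (\<Sum>i\<in>SB j. g (\<omega> i)) then 1 else (0::real)) \<partial>PM)"
    proof -
      have "integrable PM (\<lambda>\<omega>. (if (\<Sum>i\<in>SA j. g (\<omega> i)) \<le> - h \<and> h \<le> (\<Sum>i\<in>SB j. g (\<omega> i)) then 1 else (0::real)))"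
        by (rule Q.integrable_const_bound[where B=1]) auto
      then show ?thesis using Q.prob_space by (simp)
    qed
    also have "\<dots> = 1 - measure PM {\<omega>\<in>space PM. (\<Sum>i\<in>SA j. g (\<omega> i)) \<le> - h \<and> h \<le> (\<Sum>i\<in>SB j. g (\<omega> i))}"
    proof -
      have ev: "{\<omega>\<in>space PM. (\<Sum>i\<in>SA j. g (\<omega> i)) \<le> - h \<and> h \<le> (\<Sum>i\<in>SB j. g (\<omega> i))} \<in> sets PM"
        by measurable
      show ?thesis by (simp only: int_if[OF ev])
    qed
    also have "\<dots> = 1 - measure PM {\<omega>\<in>space PM. (\<Sum>i\<in>SA j. g (\<omega> i)) \<le> - h} *
                                  measure PM {\<omega>\<in>space PM. h \<le> (\<Sum>i\<in>SB j. g (\<omega> i))}"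
      by (subst prob_and) (use fin dis in auto)
    finally have eq: "(\<integral>\<omega>. G j (restrict \<omega> (KB j)) \<partial>PM) = \<dots>" .
    have "measure PM {\<omega>\<in>space PM. (\<Sum>i\<in>SA j. g (\<omega> i)) \<le> - h} *
          measure PM {\<omega>\<in>space PM. h \<le> (\<Sum>i\<in>SB j. g (\<omega> i))} \<le> 1 * 1"
      by (intro mult_mono) auto
    moreover have "1 - p \<le> exp (- p)" using exp_ge_add_one_self[of "-p"] by simp
    ultimately show ?thesis unfolding eq using p[OF j] by linarith
  qed
  have "(\<Prod>j\<in>{..<K}. \<integral>\<omega>. G j (restrict \<omega> (KB j)) \<partial>PM) \<le> (\<Prod>j\<in>{..<K}. exp (- p))"
    by (intro prod_mono) (use each in auto)
  also have "\<dots> = exp (- p * real K)" by (simp add: exp_of_nat_mult[symmetric] mult.commute)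
  finally show ?thesis using BI lhs by simp
qed


lemma card_int_block: "card {a + 1 .. a + int l} = l"
  by simp

lemma main_comb:
  fixes c \<gamma> lam A c0 :: real
  assumes c: "c > 0" and gam: "\<gamma> > 0" and lam: "0 \<le> lam" "lam * c < \<gamma>" and A: "A > 0" and c0: "c0 > 0"
    and H: "\<forall>h\<in>{0..}. \<exists>LA LB::nat. \<exists>qA qB. 1 \<le> LA \<and> 1 \<le> LB \<and> real LA \<le> A*h + A \<and> real LB \<le> A*h + A \<and>
      0 \<le> qA \<and> 0 \<le> qB \<and> c0 * exp (- (lam * h)) \<le> qA * qB \<and>
      (\<forall>J. finite J \<longrightarrow> card J = LA \<longrightarrow> qA \<le> measure PM {\<omega>\<in>space PM. (\<Sum>i\<in>J. g (\<omega> i)) \<le> - h}) \<and>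
      (\<forall>J. finite J \<longrightarrow> card J = LB \<longrightarrow> qB \<le> measure PM {\<omega>\<in>space PM. h \<le> (\<Sum>i\<in>J. g (\<omega> i))})"
  shows "AE \<omega> in PM. \<exists>n0::nat. \<forall>n\<ge>n0. \<exists>a::int. \<exists>la lb::nat. 0 \<le> a \<and>
     real_of_int (a + int la + int lb) \<le> real n powr \<gamma> \<and>
     (\<Sum>i\<in>{a+1..a+int la}. g (\<omega> i)) \<le> - (c * ln (real n)) \<and>
     c * ln (real n) \<le> (\<Sum>i\<in>{a+int la+1..a+int la+int lb}. g (\<omega> i))"
proof -
  interpret Q: prob_space PM by (rule psM[OF mu])
  obtain LA where H1: "\<forall>h\<in>{0..}. \<exists>LB::nat. \<exists>qA qB. 1 \<le> LA h \<and> 1 \<le> LB \<and> real (LA h) \<le> A*h + A \<and> real LB \<le> A*h + A \<and>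
      0 \<le> qA \<and> 0 \<le> qB \<and> c0 * exp (- (lam * h)) \<le> qA * qB \<and>
      (\<forall>J. finite J \<longrightarrow> card J = LA h \<longrightarrow> qA \<le> measure PM {\<omega>\<in>space PM. (\<Sum>i\<in>J. g (\<omega> i)) \<le> - h}) \<and>
      (\<forall>J. finite J \<longrightarrow> card J = LB \<longrightarrow> qB \<le> measure PM {\<omega>\<in>space PM. h \<le> (\<Sum>i\<in>J. g (\<omega> i))})"
    using bchoice[OF H] by blast
  obtain LB where H2: "\<forall>h\<in>{0..}. \<exists>qA qB. 1 \<le> LA h \<and> 1 \<le> LB h \<and> real (LA h) \<le> A*h + A \<and> real (LB h) \<le> A*h + A \<and>
      0 \<le> qA \<and> 0 \<le> qB \<and> c0 * exp (- (lam * h)) \<le> qA * qB \<and>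
      (\<forall>J. finite J \<longrightarrow> card J = LA h \<longrightarrow> qA \<le> measure PM {\<omega>\<in>space PM. (\<Sum>i\<in>J. g (\<omega> i)) \<le> - h}) \<and>
      (\<forall>J. finite J \<longrightarrow> card J = LB h \<longrightarrow> qB \<le> measure PM {\<omega>\<in>space PM. h \<le> (\<Sum>i\<in>J. g (\<omega> i))})"
    using bchoice[OF H1] by blast
  obtain qA where H3: "\<forall>h\<in>{0..}. \<exists>qB. 1 \<le> LA h \<and> 1 \<le> LB h \<and> real (LA h) \<le> A*h + A \<and> real (LB h) \<le> A*h + A \<and>
      0 \<le> qA h \<and> 0 \<le> qB \<and> c0 * exp (- (lam * h)) \<le> qA h * qB \<and>
      (\<forall>J. finite J \<longrightarrow> card J = LA h \<longrightarrow> qA h \<le> measure PM {\<omega>\<in>space PM. (\<Sum>i\<in>J. g (\<omega> i)) \<le> - h}) \<and>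
      (\<forall>J. finite J \<longrightarrow> card J = LB h \<longrightarrow> qB \<le> measure PM {\<omega>\<in>space PM. h \<le> (\<Sum>i\<in>J. g (\<omega> i))})"
    using bchoice[OF H2] by blast
  obtain qB where HH: "\<forall>h\<in>{0..}. 1 \<le> LA h \<and> 1 \<le> LB h \<and> real (LA h) \<le> A*h + A \<and> real (LB h) \<le> A*h + A \<and>
      0 \<le> qA h \<and> 0 \<le> qB h \<and> c0 * exp (- (lam * h)) \<le> qA h * qB h \<and>
      (\<forall>J. finite J \<longrightarrow> card J = LA h \<longrightarrow> qA h \<le> measure PM {\<omega>\<in>space PM. (\<Sum>i\<in>J. g (\<omega> i)) \<le> - h}) \<and>
      (\<forall>J. finite J \<longrightarrow> card J = LB h \<longrightarrow> qB h \<le> measure PM {\<omega>\<in>space PM. h \<le> (\<Sum>i\<in>J. g (\<omega> i))})"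
    using bchoice[OF H3] by blast
  define hh where "hh n = c * ln (real n)" for n :: nat
  have hh0: "0 \<le> hh n" for n unfolding hh_def using c by (cases "n = 0") auto
  define la where "la n = LA (hh n)" for n
  define lb where "lb n = LB (hh n)" for n
  define L0 where "L0 n = la n + lb n" for n
  define K where "K n = nat \<lfloor>real n powr \<gamma> / real (L0 n)\<rfloor>" for n
  define p where "p n = qA (hh n) * qB (hh n)" for n
  define base where "base n j = int (j * L0 n)" for n j :: nat
  define SA where "SA n j = {base n j + 1 .. base n j + int (la n)}" for n j
  define SB where "SB n j = {base n j + int (la n) + 1 .. base n j + int (la n) + int (lb n)}" for n j
  define KB where "KB n j = {base n j + 1 .. base n j + int (L0 n)}" for n j
  define F where "F n = {\<omega>\<in>space PM. \<forall>j<K n. \<not> ((\<Sum>i\<in>SA n j. g (\<omega> i)) \<le> - hh n \<and> hh n \<le> (\<Sum>i\<in>SB n j. g (\<omega> i)))}" for n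
  have HHn: "1 \<le> la n \<and> 1 \<le> lb n \<and> real (la n) \<le> A * hh n + A \<and> real (lb n) \<le> A * hh n + A \<and>
      0 \<le> qA (hh n) \<and> 0 \<le> qB (hh n) \<and> c0 * exp (- (lam * hh n)) \<le> p n \<and>
      (\<forall>J. finite J \<longrightarrow> card J = la n \<longrightarrow> qA (hh n) \<le> measure PM {\<omega>\<in>space PM. (\<Sum>i\<in>J. g (\<omega> i)) \<le> - hh n}) \<and>
      (\<forall>J. finite J \<longrightarrow> card J = lb n \<longrightarrow> qB (hh n) \<le> measure PM {\<omega>\<in>space PM. hh n \<le> (\<Sum>i\<in>J. g (\<omega> i))})" for n
    using HH hh0[of n] unfolding la_def lb_def p_def by auto
  have Fm[measurable]: "F n \<in> sets PM" for n unfolding F_def by measurable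
  have Fb: "measure PM (F n) \<le> exp (- p n * real (K n))" for n
    unfolding F_def
  proof (rule fail_bound)
    show "finite (SA n j)" "finite (SB n j)" for j unfolding SA_def SB_def by auto
    show "SA n j \<subseteq> KB n j" "SB n j \<subseteq> KB n j" for j unfolding SA_def SB_def KB_def L0_def by auto
    show "SA n j \<inter> SB n j = {}" for j unfolding SA_def SB_def by auto
    show "disjoint_family_on (KB n) {..<K n}"
    proof (unfold disjoint_family_on_def, intro ballI impI)
      fix j j' assume "j \<in> {..<K n}" "j' \<in> {..<K n}" "j \<noteq> j'"
      have key: "KB n j \<inter> KB n j' = {}" if "j < j'" for j j'
      proof -
        have "Suc j * L0 n \<le> j' * L0 n" using that by (intro mult_right_mono) auto
        then have "int (Suc j * L0 n) \<le> int (j' * L0 n)" by (simp only: of_nat_le_iff)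
        then have "base n j + int (L0 n) \<le> base n j'" unfolding base_def by (simp add: algebra_simps)
        then show ?thesis unfolding KB_def by auto
      qed
      show "KB n j \<inter> KB n j' = {}"
        using key[of j j'] key[of j' j] \<open>j \<noteq> j'\<close> by (cases "j < j'") (auto simp: Int_commute)
    qed
    show "p n \<le> measure PM {\<omega>\<in>space PM. (\<Sum>i\<in>SA n j. g (\<omega> i)) \<le> - hh n} *
                 measure PM {\<omega>\<in>space PM. hh n \<le> (\<Sum>i\<in>SB n j. g (\<omega> i))}" if "j < K n" for j
    proof -
      have cA: "card (SA n j) = la n" unfolding SA_def by simp
      have cB: "card (SB n j) = lb n" unfolding SB_def by simp
      have "qA (hh n) \<le> measure PM {\<omega>\<in>space PM. (\<Sum>i\<in>SA n j. g (\<omega> i)) \<le> - hh n}"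
        using HHn[of n] cA unfolding SA_def by auto
      moreover have "qB (hh n) \<le> measure PM {\<omega>\<in>space PM. hh n \<le> (\<Sum>i\<in>SB n j. g (\<omega> i))}"
        using HHn[of n] cB unfolding SB_def by auto
      ultimately show ?thesis unfolding p_def using HHn[of n] by (intro mult_mono) auto
    qed
  qed
  define Qf where "Qf x = x powr \<gamma> / (2 * A * c * ln x + 2 * A) - 1" for x :: real
  have ev1: "eventually (\<lambda>x. 0 < Qf x \<and> 2 * ln x \<le> c0 * x powr (- (lam * c)) * Qf x) at_top"
    unfolding Qf_def using asym1[OF gam A c] asym2[OF gam A c _ lam(2) c0] lam c
    by (simp add: eventually_conj_iff)
  have ev2: "eventually (\<lambda>n. 0 < Qf (real n) \<and> 2 * ln (real n) \<le> c0 * real n powr (- (lam * c)) * Qf (real n)) sequentially"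
    by (rule eventually_compose_filterlim[OF ev1 filterlim_real_sequentially])
  have ev3: "eventually (\<lambda>n. norm (measure PM (F n)) \<le> inverse (real n ^ 2)) sequentially"
    using ev2 eventually_gt_at_top[of "0::nat"]
  proof eventually_elim
    case (elim n)
    then have n0: "0 < real n" by simp
    have L0pos: "0 < real (L0 n)" using HHn[of n] unfolding L0_def by auto
    have L0le: "real (L0 n) \<le> 2 * A * c * ln (real n) + 2 * A"
      using HHn[of n] unfolding L0_def hh_def by (simp add: algebra_simps)
    have "real n powr \<gamma> / (2 * A * c * ln (real n) + 2 * A) \<le> real n powr \<gamma> / real (L0 n)"
      using L0pos L0le by (intro divide_left_mono) auto
    moreover have "real n powr \<gamma> / real (L0 n) - 1 \<le> real (K n)"
    proof -
      have "0 \<le> real n powr \<gamma> / real (L0 n)" by simp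
      then show ?thesis unfolding K_def by linarith
    qed
    ultimately have KQ: "Qf (real n) \<le> real (K n)" unfolding Qf_def by linarith
    have pn: "c0 * real n powr (- (lam * c)) \<le> p n"
    proof -
      have "exp (- (lam * hh n)) = real n powr (- (lam * c))"
        unfolding hh_def powr_def using n0 by (simp add: algebra_simps)
      then show ?thesis using HHn[of n] by simp
    qed
    have "2 * ln (real n) \<le> c0 * real n powr (- (lam * c)) * Qf (real n)" using elim by simp
    also have "\<dots> \<le> p n * Qf (real n)" using pn elim by (intro mult_right_mono) auto
    also have "\<dots> \<le> p n * real (K n)"
      using KQ HHn[of n] unfolding p_def by (intro mult_left_mono) auto
    finally have "- p n * real (K n) \<le> - 2 * ln (real n)" by simp
    then have "exp (- p n * real (K n)) \<le> exp (- 2 * ln (real n))" by simp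
    also have "\<dots> = inverse (real n ^ 2)"
    proof -
      have "exp (2 * ln (real n)) = exp (ln (real n)) ^ 2" using exp_of_nat_mult[of 2 "ln (real n)"] by simp
      also have "\<dots> = real n ^ 2" using n0 by simp
      finally show ?thesis by (simp add: exp_minus)
    qed
    finally show ?case using Fb[of n] by simp
  qed
  have summ: "summable (\<lambda>n. measure PM (F n))"
    by (rule summable_comparison_test_ev[OF ev3]) (rule inverse_power_summable, simp)
  have "AE \<omega> in PM. eventually (\<lambda>n. \<omega> \<in> space PM - F n) sequentially"
    by (rule borel_cantelli_AE1[OF Fm _ summ]) (simp add: Q.emeasure_finite less_top[symmetric])
  then show ?thesis
  proof (rule AE_mp, intro AE_I2 impI)
    fix \<omega> assume "eventually (\<lambda>n. \<omega> \<in> space PM - F n) sequentially"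
    then obtain n0 where n0: "\<And>n. n \<ge> n0 \<Longrightarrow> \<omega> \<in> space PM - F n" unfolding eventually_sequentially by blast
    show "\<exists>n0::nat. \<forall>n\<ge>n0. \<exists>a::int. \<exists>la lb::nat. 0 \<le> a \<and>
     real_of_int (a + int la + int lb) \<le> real n powr \<gamma> \<and>
     (\<Sum>i\<in>{a+1..a+int la}. g (\<omega> i)) \<le> - (c * ln (real n)) \<and>
     c * ln (real n) \<le> (\<Sum>i\<in>{a+int la+1..a+int la+int lb}. g (\<omega> i))"
    proof (intro exI[of _ n0] allI impI)
      fix n assume "n0 \<le> n"
      then have "\<omega> \<in> space PM" "\<omega> \<notin> F n" using n0 by auto
      then obtain j where j: "j < K n" "(\<Sum>i\<in>SA n j. g (\<omega> i)) \<le> - hh n" "hh n \<le> (\<Sum>i\<in>SB n j. g (\<omega> i))"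
        unfolding F_def by auto
      have "real (Suc j * L0 n) \<le> real (K n * L0 n)" using j(1) by (intro of_nat_mono mult_right_mono) auto
      also have "\<dots> \<le> real n powr \<gamma>"
      proof (cases "L0 n = 0")
        case False
        have "real (K n) \<le> real n powr \<gamma> / real (L0 n)" unfolding K_def
          by (simp add: of_nat_floor)
        then show ?thesis using False by (simp add: field_simps)
      qed simp
      finally have bnd: "real_of_int (base n j + int (la n) + int (lb n)) \<le> real n powr \<gamma>"
        unfolding base_def L0_def by (simp add: algebra_simps)
      show "\<exists>a::int. \<exists>la lb::nat. 0 \<le> a \<and>
        real_of_int (a + int la + int lb) \<le> real n powr \<gamma> \<and>
        (\<Sum>i\<in>{a+1..a+int la}. g (\<omega> i)) \<le> - (c * ln (real n)) \<and>
        c * ln (real n) \<le> (\<Sum>i\<in>{a+int la+1..a+int la+int lb}. g (\<omega> i))"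
        using j bnd unfolding SA_def SB_def hh_def
        by (intro exI[of _ "base n j"] exI[of _ "la n"] exI[of _ "lb n"]) (auto simp: base_def)
    qed
  qed
qed

end


lemma potential_nonneg: "0 \<le> x \<Longrightarrow> potential \<omega> x = (\<Sum>i\<in>{1..x}. ln (rho \<omega> i))"
  unfolding potential_def by auto

lemma potential_diff:
  assumes "0 \<le> a" "a \<le> b"
  shows "potential \<omega> b - potential \<omega> a = (\<Sum>i\<in>{a+1..b}. ln (rho \<omega> i))"
proof -
  have "{1..b} = {1..a} \<union> {a+1..b}" using assms by auto
  moreover have "{1..a} \<inter> {a+1..b} = {}" by auto
  ultimately have "(\<Sum>i\<in>{1..b}. ln (rho \<omega> i)) = (\<Sum>i\<in>{1..a}. ln (rho \<omega> i)) + (\<Sum>i\<in>{a+1..b}. ln (rho \<omega> i))"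
    by (simp add: sum.union_disjoint)
  then show ?thesis using assms by (simp add: potential_nonneg)
qed

lemma trap_from:
  assumes "0 \<le> a" "a \<le> m" "m \<le> b" "potential \<omega> m - potential \<omega> a \<le> - h"
    "h \<le> potential \<omega> b - potential \<omega> m"
  shows "\<exists>x b1 b2. trap \<omega> h x b1 b2 \<and> 0 \<le> x - b1 \<and> x + b2 = b"
proof -
  define S where "S = {a..b}"
  have S: "finite S" "S \<noteq> {}" unfolding S_def using assms by auto
  have "Min (potential \<omega> ` S) \<in> potential \<omega> ` S" using S by (intro Min_in) auto
  then obtain x where x: "x \<in> S" "potential \<omega> x = Min (potential \<omega> ` S)" by auto
  have xmin: "potential \<omega> x \<le> potential \<omega> y" if "y \<in> S" for y
    using x(2) S that by simp
  have mS: "m \<in> S" unfolding S_def using assms by auto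
  have "trap \<omega> h x (x - a) (b - x)"
    unfolding trap_def
  proof (intro conjI ballI)
    show "0 \<le> x - a" "0 \<le> b - x" using x(1) unfolding S_def by auto
    show "potential \<omega> x \<le> potential \<omega> y" if "y \<in> {x - (x - a)..x + (b - x)}" for y
      using that xmin unfolding S_def by auto
    show "h \<le> potential \<omega> (x - (x - a)) - potential \<omega> x" using xmin[OF mS] assms by simp
    show "h \<le> potential \<omega> (x + (b - x)) - potential \<omega> x" using xmin[OF mS] assms by simp
  qed
  then show ?thesis using assms by (intro exI[of _ x] exI[of _ "x - a"] exI[of _ "b - x"]) auto
qed


theorem lemma3p3:
  fixes mu :: "real measure" and \<epsilon>0 \<kappa> \<gamma> \<epsilon> :: real
  assumes "prob_space mu"
    and "sets mu = sets borel"
    and "\<epsilon>0 > 0"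
    and "AE a in mu. \<epsilon>0 \<le> a \<and> a \<le> 1 - \<epsilon>0"
    and "Inf {a. measure mu {b. b \<le> a} > 0} < 1/2"
    and "1/2 < Sup {a. measure mu {b. b \<ge> a} > 0}"
    and "(\<integral>a. ln ((1 - a) / a) \<partial>mu) \<noteq> 0"
    and "\<kappa> > 0"
    and "(\<integral>a. ln ((1 - a) / a) \<partial>mu) < 0 \<Longrightarrow> (\<integral>a. ((1 - a) / a) powr \<kappa> \<partial>mu) = 1"
    and "(\<integral>a. ln ((1 - a) / a) \<partial>mu) > 0 \<Longrightarrow> (\<integral>a. ((1 - a) / a) powr (- \<kappa>) \<partial>mu) = 1"
    and "\<gamma> > 0"
    and "0 < \<epsilon>" and "\<epsilon> < \<gamma> / \<kappa>"
  shows "AE \<omega> in PiM (UNIV :: int set) (\<lambda>_. mu).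
           \<exists>n0::nat. \<forall>n\<ge>n0. \<exists>x b1 b2.
             trap \<omega> ((\<gamma> / \<kappa> - \<epsilon>) * ln (real n)) x b1 b2 \<and>
             0 \<le> x - b1 \<and> real_of_int (x + b2) \<le> real n powr \<gamma>"
proof -
  note mu = assms(1) and setsmu = assms(2) and e0 = assms(3) and AEb = assms(4)
  note E0 = assms(7) and k = assms(8) and gam = assms(11) and eps = assms(12,13)
  define X where "X a = ln ((1 - a) / a)" for a :: real
  define B where "B = max 1 \<bar>ln \<epsilon>0\<bar>"
  define f where "f a = max (- B) (min B (X a))" for a
  have B1: "1 \<le> B" unfolding B_def by simp
  have fB: "\<bar>f a\<bar> \<le> B" for a unfolding f_def using B1 by auto
  have Xm: "X \<in> borel_measurable mu" unfolding X_def measurable_cong_sets[OF setsmu refl] by measurable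
  have fm: "f \<in> borel_measurable mu" unfolding f_def using Xm by measurable
  have Xbound: "\<bar>X a\<bar> \<le> B" if a: "\<epsilon>0 \<le> a" "a \<le> 1 - \<epsilon>0" for a
  proof -
    have a0: "0 < a" using a e0 by simp
    have y1: "(1 - a) / a \<le> 1 / \<epsilon>0"
    proof -
      have "(1 - a) / a \<le> 1 / a" using a0 a by (intro divide_right_mono) auto
      also have "\<dots> \<le> 1 / \<epsilon>0" using a e0 by (intro divide_left_mono) auto
      finally show ?thesis .
    qed
    have y2: "\<epsilon>0 \<le> (1 - a) / a"
    proof -
      have "\<epsilon>0 \<le> 1 - a" using a by simp
      moreover have "1 - a \<le> (1 - a) / a" using a0 a e0 by (simp add: le_divide_eq)
      ultimately show ?thesis by linarith
    qed
    have "X a \<le> ln (1 / \<epsilon>0)" unfolding X_def using y1 y2 e0 by (subst ln_le_cancel_iff) auto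
    moreover have "ln \<epsilon>0 \<le> X a" unfolding X_def using y2 e0 by (subst ln_le_cancel_iff) auto
    ultimately show ?thesis unfolding B_def using e0 by (auto simp: ln_div)
  qed
  have fX: "f a = X a" if "\<epsilon>0 \<le> a" "a \<le> 1 - \<epsilon>0" for a
    using Xbound[OF that] unfolding f_def by auto
  have AEfX: "AE a in mu. f a = X a" using AEb by (rule AE_mp) (auto intro!: AE_I2 fX)
  have intfX: "(\<integral>a. f a \<partial>mu) = (\<integral>a. ln ((1 - a) / a) \<partial>mu)"
    unfolding X_def[symmetric] by (rule integral_cong_AE) (use fm Xm AEfX in auto)
  have powr_eq: "AE a in mu. ((1 - a) / a) powr t = exp (t * f a)" for t
    using AEb
  proof (rule AE_mp, intro AE_I2 impI)
    fix a assume a: "\<epsilon>0 \<le> a \<and> a \<le> 1 - \<epsilon>0"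
    then have "0 < (1 - a) / a" using e0 by (intro divide_pos_pos) auto
    moreover have "a \<noteq> 1 \<and> a \<noteq> 0" using a e0 by auto
    ultimately show "((1 - a) / a) powr t = exp (t * f a)" using fX[of a] a unfolding X_def powr_def by simp
  qed
  have intpowr: "(\<integral>a. ((1 - a) / a) powr t \<partial>mu) = (\<integral>a. exp (t * f a) \<partial>mu)" for t
    by (rule integral_cong_AE) (use fm powr_eq setsmu in \<open>auto simp: measurable_cong_sets[OF setsmu refl]\<close>)
  define c where "c = \<gamma> / \<kappa> - \<epsilon>"
  have c0: "c > 0" unfolding c_def using eps by simp
  have kc: "\<kappa> * c < \<gamma>" unfolding c_def using k eps by (simp add: algebra_simps)
  have kc0: "\<kappa> * c > 0" using k c0 by simp
  define r where "r = (\<gamma> / (\<kappa> * c) + 1) / 2"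
  have gkc: "\<gamma> / (\<kappa> * c) > 1" using kc kc0 by (simp add: field_simps)
  have r1: "r > 1" unfolding r_def using gkc by simp
  have rlt: "r < \<gamma> / (\<kappa> * c)"
  proof -
    define q where "q = \<gamma> / (\<kappa> * c)"
    have "r = (q + 1) / 2" "q > 1" unfolding r_def q_def using gkc by auto
    then show ?thesis unfolding q_def[symmetric] by (simp add: field_simps)
  qed
  define lam where "lam = \<kappa> * r"
  have lam0: "0 \<le> lam" unfolding lam_def using k r1 by simp
  have lamc: "lam * c < \<gamma>"
  proof -
    have "r * (\<kappa> * c) < \<gamma>" using rlt kc0 by (simp add: field_simps)
    then show ?thesis unfolding lam_def by (simp add: algebra_simps)
  qed
  have Hyp: "\<exists>A c0. A > 0 \<and> c0 > 0 \<and> (\<forall>h\<in>{0..}. \<exists>LA LB::nat. \<exists>qA qB. 1 \<le> LA \<and> 1 \<le> LB \<and> real LA \<le> A*h + A \<and> real LB \<le> A*h + A \<and>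
      0 \<le> qA \<and> 0 \<le> qB \<and> c0 * exp (- (lam * h)) \<le> qA * qB \<and>
      (\<forall>J. finite J \<longrightarrow> card J = LA \<longrightarrow> qA \<le> measure (PiM (UNIV::int set) (\<lambda>_. mu)) {\<omega>\<in>space (PiM (UNIV::int set) (\<lambda>_. mu)). (\<Sum>i\<in>J. f (\<omega> i)) \<le> - h}) \<and>
      (\<forall>J. finite J \<longrightarrow> card J = LB \<longrightarrow> qB \<le> measure (PiM (UNIV::int set) (\<lambda>_. mu)) {\<omega>\<in>space (PiM (UNIV::int set) (\<lambda>_. mu)). h \<le> (\<Sum>i\<in>J. f (\<omega> i))}))"
  proof (cases "(\<integral>a. ln ((1 - a) / a) \<partial>mu) < 0")
    case True
    have g0: "(\<integral>a. f a \<partial>mu) < 0" using True intfX by simp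
    have phi1: "(\<integral>a. exp (\<kappa> * f a) \<partial>mu) = 1" using assms(9)[OF True] intpowr by simp
    obtain A1 where AT: "A1 > 0 \<and> (\<forall>h\<ge>0. \<exists>L::nat. 1 \<le> L \<and> real L \<le> A1 * h + A1 \<and>
      (\<forall>J. finite J \<longrightarrow> card J = L \<longrightarrow>
       1/2 \<le> measure (PiM (UNIV::int set) (\<lambda>_. mu)) {\<omega> \<in> space (PiM (UNIV::int set) (\<lambda>_. mu)). (\<Sum>i\<in>J. f (\<omega> i)) \<le> - h}))"
      using typ_exists[OF mu fm fB B1 g0] by (elim exE) (rule that, assumption)
    have A1: "A1 > 0" using AT by (rule conjunct1)
    have T: "\<forall>h\<ge>0. \<exists>L::nat. 1 \<le> L \<and> real L \<le> A1 * h + A1 \<and>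
      (\<forall>J. finite J \<longrightarrow> card J = L \<longrightarrow>
       1/2 \<le> measure (PiM (UNIV::int set) (\<lambda>_. mu)) {\<omega> \<in> space (PiM (UNIV::int set) (\<lambda>_. mu)). (\<Sum>i\<in>J. f (\<omega> i)) \<le> - h})"
      using AT by (rule conjunct2)
    have g0ne: "(\<integral>a. f a \<partial>mu) \<noteq> 0" using g0 by simp
    obtain A2 cc where ACR: "A2 > 0 \<and> cc > 0 \<and> (\<forall>h\<ge>0. \<exists>L::nat. 1 \<le> L \<and> real L \<le> A2 * h + A2 \<and>
      (\<forall>J. finite J \<longrightarrow> card J = L \<longrightarrow>
       cc * exp (- (\<kappa> * r * h)) \<le> measure (PiM (UNIV::int set) (\<lambda>_. mu)) {\<omega> \<in> space (PiM (UNIV::int set) (\<lambda>_. mu)). h \<le> (\<Sum>i\<in>J. f (\<omega> i))}))"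
      using rare_exists[OF mu fm fB B1 k phi1 g0ne r1] by (elim exE) (rule that, assumption)
    have A2: "A2 > 0" "cc > 0" using ACR by simp_all
    have R: "\<forall>h\<ge>0. \<exists>L::nat. 1 \<le> L \<and> real L \<le> A2 * h + A2 \<and>
      (\<forall>J. finite J \<longrightarrow> card J = L \<longrightarrow>
       cc * exp (- (\<kappa> * r * h)) \<le> measure (PiM (UNIV::int set) (\<lambda>_. mu)) {\<omega> \<in> space (PiM (UNIV::int set) (\<lambda>_. mu)). h \<le> (\<Sum>i\<in>J. f (\<omega> i))})"
      using ACR by (elim conjE)
    show ?thesis
    proof (rule exI[of _ "max A1 A2"], rule exI[of _ "cc / 2"], intro conjI ballI)
      show "max A1 A2 > 0" using A1 by simp
      show "cc / 2 > 0" using A2 by simp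
      fix h :: real assume "h \<in> {0..}"
      then have h: "h \<ge> 0" by simp
      obtain L1 where L1: "1 \<le> L1" "real L1 \<le> A1 * h + A1" "\<forall>J. finite J \<longrightarrow> card J = L1 \<longrightarrow>
       1/2 \<le> measure (PiM (UNIV::int set) (\<lambda>_. mu)) {\<omega> \<in> space (PiM (UNIV::int set) (\<lambda>_. mu)). (\<Sum>i\<in>J. f (\<omega> i)) \<le> - h}"
        using T[rule_format, OF h] by blast
      obtain L2 where L2: "1 \<le> L2" "real L2 \<le> A2 * h + A2" "\<forall>J. finite J \<longrightarrow> card J = L2 \<longrightarrow>
       cc * exp (- (\<kappa> * r * h)) \<le> measure (PiM (UNIV::int set) (\<lambda>_. mu)) {\<omega> \<in> space (PiM (UNIV::int set) (\<lambda>_. mu)). h \<le> (\<Sum>i\<in>J. f (\<omega> i))}"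
        using R[rule_format, OF h] by blast
      have m1: "A1 * h + A1 \<le> max A1 A2 * h + max A1 A2" using h by (intro add_mono mult_right_mono) auto
      have m2: "A2 * h + A2 \<le> max A1 A2 * h + max A1 A2" using h by (intro add_mono mult_right_mono) auto
      show "\<exists>LA LB::nat. \<exists>qA qB. 1 \<le> LA \<and> 1 \<le> LB \<and> real LA \<le> max A1 A2*h + max A1 A2 \<and> real LB \<le> max A1 A2*h + max A1 A2 \<and>
      0 \<le> qA \<and> 0 \<le> qB \<and> cc / 2 * exp (- (lam * h)) \<le> qA * qB \<and>
      (\<forall>J. finite J \<longrightarrow> card J = LA \<longrightarrow> qA \<le> measure (PiM (UNIV::int set) (\<lambda>_. mu)) {\<omega>\<in>space (PiM (UNIV::int set) (\<lambda>_. mu)). (\<Sum>i\<in>J. f (\<omega> i)) \<le> - h}) \<and>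
      (\<forall>J. finite J \<longrightarrow> card J = LB \<longrightarrow> qB \<le> measure (PiM (UNIV::int set) (\<lambda>_. mu)) {\<omega>\<in>space (PiM (UNIV::int set) (\<lambda>_. mu)). h \<le> (\<Sum>i\<in>J. f (\<omega> i))})"
        apply (rule exI[of _ L1], rule exI[of _ L2], rule exI[of _ "1/2"], rule exI[of _ "cc * exp (- (\<kappa> * r * h))"])
        using L1 L2 m1 m2 A2 unfolding lam_def by (auto simp: mult.assoc)
    qed
  next
    case False
    then have Pos: "(\<integral>a. ln ((1 - a) / a) \<partial>mu) > 0" using E0 by simp
    define g where "g a = - f a" for a
    have gm: "g \<in> borel_measurable mu" unfolding g_def using fm by measurable
    have gB: "\<bar>g a\<bar> \<le> B" for a unfolding g_def using fB[of a] by simp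
    have g0: "(\<integral>a. g a \<partial>mu) < 0" unfolding g_def using Pos intfX by simp
    have phi1: "(\<integral>a. exp (\<kappa> * g a) \<partial>mu) = 1" using assms(10)[OF Pos] intpowr[of "-\<kappa>"] unfolding g_def by simp
    have setA: "{\<omega>\<in>space (PiM (UNIV::int set) (\<lambda>_. mu)). h \<le> (\<Sum>i\<in>J. g (\<omega> i))} = {\<omega>\<in>space (PiM (UNIV::int set) (\<lambda>_. mu)). (\<Sum>i\<in>J. f (\<omega> i)) \<le> - h}" for h J
      unfolding g_def by (auto simp: sum_negf)
    have setB: "{\<omega>\<in>space (PiM (UNIV::int set) (\<lambda>_. mu)). (\<Sum>i\<in>J. g (\<omega> i)) \<le> - h} = {\<omega>\<in>space (PiM (UNIV::int set) (\<lambda>_. mu)). h \<le> (\<Sum>i\<in>J. f (\<omega> i))}" for h J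
      unfolding g_def by (auto simp: sum_negf)
    obtain A1 where AT: "A1 > 0 \<and> (\<forall>h\<ge>0. \<exists>L::nat. 1 \<le> L \<and> real L \<le> A1 * h + A1 \<and>
      (\<forall>J. finite J \<longrightarrow> card J = L \<longrightarrow>
       1/2 \<le> measure (PiM (UNIV::int set) (\<lambda>_. mu)) {\<omega> \<in> space (PiM (UNIV::int set) (\<lambda>_. mu)). h \<le> (\<Sum>i\<in>J. f (\<omega> i))}))"
      using typ_exists[OF mu gm gB B1 g0, unfolded setB] by (elim exE) (rule that, assumption)
    have A1: "A1 > 0" using AT by (rule conjunct1)
    have T: "\<forall>h\<ge>0. \<exists>L::nat. 1 \<le> L \<and> real L \<le> A1 * h + A1 \<and>
      (\<forall>J. finite J \<longrightarrow> card J = L \<longrightarrow>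
       1/2 \<le> measure (PiM (UNIV::int set) (\<lambda>_. mu)) {\<omega> \<in> space (PiM (UNIV::int set) (\<lambda>_. mu)). h \<le> (\<Sum>i\<in>J. f (\<omega> i))})"
      using AT by (rule conjunct2)
    have g0ne: "(\<integral>a. g a \<partial>mu) \<noteq> 0" using g0 by simp
    obtain A2 cc where ACR: "A2 > 0 \<and> cc > 0 \<and> (\<forall>h\<ge>0. \<exists>L::nat. 1 \<le> L \<and> real L \<le> A2 * h + A2 \<and>
      (\<forall>J. finite J \<longrightarrow> card J = L \<longrightarrow>
       cc * exp (- (\<kappa> * r * h)) \<le> measure (PiM (UNIV::int set) (\<lambda>_. mu)) {\<omega> \<in> space (PiM (UNIV::int set) (\<lambda>_. mu)). (\<Sum>i\<in>J. f (\<omega> i)) \<le> - h}))"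
      using rare_exists[OF mu gm gB B1 k phi1 g0ne r1, unfolded setA] by (elim exE) (rule that, assumption)
    have A2: "A2 > 0" "cc > 0" using ACR by simp_all
    have R: "\<forall>h\<ge>0. \<exists>L::nat. 1 \<le> L \<and> real L \<le> A2 * h + A2 \<and>
      (\<forall>J. finite J \<longrightarrow> card J = L \<longrightarrow>
       cc * exp (- (\<kappa> * r * h)) \<le> measure (PiM (UNIV::int set) (\<lambda>_. mu)) {\<omega> \<in> space (PiM (UNIV::int set) (\<lambda>_. mu)). (\<Sum>i\<in>J. f (\<omega> i)) \<le> - h})"
      using ACR by (elim conjE)
    show ?thesis
    proof (rule exI[of _ "max A1 A2"], rule exI[of _ "cc / 2"], intro conjI ballI)
      show "max A1 A2 > 0" using A1 by simp
      show "cc / 2 > 0" using A2 by simp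
      fix h :: real assume "h \<in> {0..}"
      then have h: "h \<ge> 0" by simp
      obtain L1 where L1: "1 \<le> L1" "real L1 \<le> A1 * h + A1" "\<forall>J. finite J \<longrightarrow> card J = L1 \<longrightarrow>
       1/2 \<le> measure (PiM (UNIV::int set) (\<lambda>_. mu)) {\<omega> \<in> space (PiM (UNIV::int set) (\<lambda>_. mu)). h \<le> (\<Sum>i\<in>J. f (\<omega> i))}"
        using T[rule_format, OF h] by blast
      obtain L2 where L2: "1 \<le> L2" "real L2 \<le> A2 * h + A2" "\<forall>J. finite J \<longrightarrow> card J = L2 \<longrightarrow>
       cc * exp (- (\<kappa> * r * h)) \<le> measure (PiM (UNIV::int set) (\<lambda>_. mu)) {\<omega> \<in> space (PiM (UNIV::int set) (\<lambda>_. mu)). (\<Sum>i\<in>J. f (\<omega> i)) \<le> - h}"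
        using R[rule_format, OF h] by blast
      have m1: "A1 * h + A1 \<le> max A1 A2 * h + max A1 A2" using h by (intro add_mono mult_right_mono) auto
      have m2: "A2 * h + A2 \<le> max A1 A2 * h + max A1 A2" using h by (intro add_mono mult_right_mono) auto
      show "\<exists>LA LB::nat. \<exists>qA qB. 1 \<le> LA \<and> 1 \<le> LB \<and> real LA \<le> max A1 A2*h + max A1 A2 \<and> real LB \<le> max A1 A2*h + max A1 A2 \<and>
      0 \<le> qA \<and> 0 \<le> qB \<and> cc / 2 * exp (- (lam * h)) \<le> qA * qB \<and>
      (\<forall>J. finite J \<longrightarrow> card J = LA \<longrightarrow> qA \<le> measure (PiM (UNIV::int set) (\<lambda>_. mu)) {\<omega>\<in>space (PiM (UNIV::int set) (\<lambda>_. mu)). (\<Sum>i\<in>J. f (\<omega> i)) \<le> - h}) \<and>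
      (\<forall>J. finite J \<longrightarrow> card J = LB \<longrightarrow> qB \<le> measure (PiM (UNIV::int set) (\<lambda>_. mu)) {\<omega>\<in>space (PiM (UNIV::int set) (\<lambda>_. mu)). h \<le> (\<Sum>i\<in>J. f (\<omega> i))})"
        apply (rule exI[of _ L2], rule exI[of _ L1], rule exI[of _ "cc * exp (- (\<kappa> * r * h))"], rule exI[of _ "1/2"])
        using L1 L2 m1 m2 A2 unfolding lam_def by (auto simp: mult.assoc)
    qed
  qed
  then obtain A cc where AHH: "A > 0 \<and> cc > 0 \<and> (\<forall>h\<in>{0..}. \<exists>LA LB::nat. \<exists>qA qB. 1 \<le> LA \<and> 1 \<le> LB \<and> real LA \<le> A*h + A \<and> real LB \<le> A*h + A \<and>
      0 \<le> qA \<and> 0 \<le> qB \<and> cc * exp (- (lam * h)) \<le> qA * qB \<and>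
      (\<forall>J. finite J \<longrightarrow> card J = LA \<longrightarrow> qA \<le> measure (PiM (UNIV::int set) (\<lambda>_. mu)) {\<omega>\<in>space (PiM (UNIV::int set) (\<lambda>_. mu)). (\<Sum>i\<in>J. f (\<omega> i)) \<le> - h}) \<and>
      (\<forall>J. finite J \<longrightarrow> card J = LB \<longrightarrow> qB \<le> measure (PiM (UNIV::int set) (\<lambda>_. mu)) {\<omega>\<in>space (PiM (UNIV::int set) (\<lambda>_. mu)). h \<le> (\<Sum>i\<in>J. f (\<omega> i))}))"
    by (elim exE) (rule that, assumption)
  have A: "A > 0" "cc > 0" using AHH by simp_all
  have HH: "\<forall>h\<in>{0..}. \<exists>LA LB::nat. \<exists>qA qB. 1 \<le> LA \<and> 1 \<le> LB \<and> real LA \<le> A*h + A \<and> real LB \<le> A*h + A \<and>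
      0 \<le> qA \<and> 0 \<le> qB \<and> cc * exp (- (lam * h)) \<le> qA * qB \<and>
      (\<forall>J. finite J \<longrightarrow> card J = LA \<longrightarrow> qA \<le> measure (PiM (UNIV::int set) (\<lambda>_. mu)) {\<omega>\<in>space (PiM (UNIV::int set) (\<lambda>_. mu)). (\<Sum>i\<in>J. f (\<omega> i)) \<le> - h}) \<and>
      (\<forall>J. finite J \<longrightarrow> card J = LB \<longrightarrow> qB \<le> measure (PiM (UNIV::int set) (\<lambda>_. mu)) {\<omega>\<in>space (PiM (UNIV::int set) (\<lambda>_. mu)). h \<le> (\<Sum>i\<in>J. f (\<omega> i))})"
    using AHH by (elim conjE)
  have MC: "AE \<omega> in PiM (UNIV::int set) (\<lambda>_. mu). \<exists>n0::nat. \<forall>n\<ge>n0. \<exists>a::int. \<exists>la lb::nat. 0 \<le> a \<and>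
     real_of_int (a + int la + int lb) \<le> real n powr \<gamma> \<and>
     (\<Sum>i\<in>{a+1..a+int la}. f (\<omega> i)) \<le> - (c * ln (real n)) \<and>
     c * ln (real n) \<le> (\<Sum>i\<in>{a+int la+1..a+int la+int lb}. f (\<omega> i))"
    by (rule main_comb[OF mu fm fB B1 c0 gam lam0 lamc A(1) A(2) HH])
  have good: "AE \<omega> in PiM (UNIV::int set) (\<lambda>_. mu). \<forall>i. \<epsilon>0 \<le> \<omega> i \<and> \<omega> i \<le> 1 - \<epsilon>0"
  proof -
    interpret product_prob_space "\<lambda>_::int. mu" "UNIV::int set" by (rule pps[OF mu])
    show ?thesis unfolding AE_all_countable using AE_component[OF _ AEb] by auto
  qed
  show ?thesis
    using MC good
  proof (eventually_elim)
    case (elim \<omega>)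
    from elim(1) obtain n0 :: nat where n0: "\<forall>n\<ge>n0. \<exists>a::int. \<exists>la lb::nat. 0 \<le> a \<and>
     real_of_int (a + int la + int lb) \<le> real n powr \<gamma> \<and>
     (\<Sum>i\<in>{a+1..a+int la}. f (\<omega> i)) \<le> - (c * ln (real n)) \<and>
     c * ln (real n) \<le> (\<Sum>i\<in>{a+int la+1..a+int la+int lb}. f (\<omega> i))" by blast
    have lnrho: "ln (rho \<omega> i) = f (\<omega> i)" for i
      using fX[of "\<omega> i"] elim(2) unfolding X_def rho_def by auto
    show ?case
    proof (intro exI[of _ n0] allI impI)
      fix n assume "n0 \<le> n"
      then obtain a :: int and la lb :: nat where a: "0 \<le> a" "real_of_int (a + int la + int lb) \<le> real n powr \<gamma>"
        "(\<Sum>i\<in>{a+1..a+int la}. f (\<omega> i)) \<le> - (c * ln (real n))"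
        "c * ln (real n) \<le> (\<Sum>i\<in>{a+int la+1..a+int la+int lb}. f (\<omega> i))"
        using n0 by blast
      have d1: "potential \<omega> (a + int la) - potential \<omega> a \<le> - (c * ln (real n))"
        using a(1,3) by (subst potential_diff) (auto simp: lnrho)
      have d2: "c * ln (real n) \<le> potential \<omega> (a + int la + int lb) - potential \<omega> (a + int la)"
        using a(1,4) by (subst potential_diff) (auto simp: lnrho)
      obtain x b1 b2 where t: "trap \<omega> (c * ln (real n)) x b1 b2" "0 \<le> x - b1" "x + b2 = a + int la + int lb"
        using trap_from[OF a(1) _ _ d1 d2] by auto
      show "\<exists>x b1 b2. trap \<omega> ((\<gamma> / \<kappa> - \<epsilon>) * ln (real n)) x b1 b2 \<and> 0 \<le> x - b1 \<and> real_of_int (x + b2) \<le> real n powr \<gamma>"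
      proof -
        have "real_of_int (x + b2) \<le> real n powr \<gamma>" using t(3) a(2) by simp
        then show ?thesis using t(1,2) unfolding c_def by blast
      qed
    qed
  qed
qed

end
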